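(* In any convex resource theory, for any input state $\rho$ and output state $\rho'$, $H\big(\rho\,\big|\,V_{\mathcal F'}(\rho')^{-1}\big)\ge P(\rho\to\rho')\ge H\big(\rho\,\big|\,R^{\mathcal F'}_{\mathcal F'}(\rho')\big)$.
   Context: Finite dimensions; $\langle A,B\rangle=\mathrm{Tr}(AB)$; $A\le B$ means $B-A\ge0$; $\mathrm{id}$ is the identity operator. Input free set $\mathcal F$ and output free set $\mathcal F'$ are closed convex sets of density operators. $\mathrm{cone}(\mathcal F)=\{\lambda\sigma:\lambda\ge0,\sigma\in\mathcal F\}$, $A\le_{\mathcal F}B$ iff $B-A\in\mathrm{cone}(\mathcal F)$; $R^{\mathcal F}_{\max}(X\|Y)=\inf\{\lambda:X\le_{\mathcal F}\lambda Y\}$ ($\inf\emptyset=\infty$), $R^{\mathcal F}_{\mathcal F}(\rho)=\min_{\sigma\in\mathcal F}R^{\mathcal F}_{\max}(\rho\|\sigma)$. $V_{\mathcal F}(\rho)=\max_{\sigma\in\mathcal F}\langle\Pi_\rho,\sigma\rangle$ with $\Pi_\rho$ the projector onto $\operatorname{supp}\rho$; $0^{-1}=\infty$, $\infty^{-1}=0$. For $t\in\mathbb R_+\cup\{\infty\}$: $H(\rho\,|\,t)=\max\{\langle\rho,W\rangle:\ 0\le W\le Z\le\mathrm{id},\ \langle W,\rho\rangle=\langle Z,\rho\rangle,\ \langle W,\sigma\rangle\le\frac1t\langle Z,\sigma\rangle\ \forall\sigma\in\mathcal F\}$. $\mathbb O$: completely positive trace-non-increasing maps $\mathcal E$ such that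 for every $\sigma\in\mathcal F$ there exist $\sigma'\in\mathcal F'$ and $p\in[0,1]$ with $\mathcal E(\sigma)=p\sigma'$. $P(\rho\to\rho')=\max\{p:\ \mathcal E(\rho)=p\rho',\ \mathcal E\in\mathbb O\}$. *)

theory Defs
  imports "Jordan_Normal_Form.Matrix" "HOL-Library.Extended_Real"
begin

definition mtrace :: "complex mat \<Rightarrow> complex" where
  "mtrace A = (\<Sum>i<dim_row A. A $$ (i,i))"

definition adj :: "complex mat \<Rightarrow> complex mat" where
  "adj A = mat (dim_col A) (dim_row A) (\<lambda>(i,j). cnj (A $$ (j,i)))"

definition hs :: "complex mat \<Rightarrow> complex mat \<Rightarrow> complex" where
  "hs A B = mtrace (A * B)"

text \<open>Positive semidefinite \<open>n\<times>n\<close> matrix (over \<open>\<complex>\<close> this entails Hermitian).\<close>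
definition psd :: "nat \<Rightarrow> complex mat \<Rightarrow> bool" where
  "psd n A \<longleftrightarrow> A \<in> carrier_mat n n \<and>
     (\<forall>v \<in> carrier_vec n. let z = conjugate v \<bullet> (A *\<^sub>v v) in Im z = 0 \<and> 0 \<le> Re z)"

definition loewner_le :: "nat \<Rightarrow> complex mat \<Rightarrow> complex mat \<Rightarrow> bool" where
  "loewner_le n A B \<longleftrightarrow> A \<in> carrier_mat n n \<and> B \<in> carrier_mat n n \<and> psd n (B - A)"

definition density :: "nat \<Rightarrow> complex mat \<Rightarrow> bool" where
  "density n \<rho> \<longleftrightarrow> psd n \<rho> \<and> mtrace \<rho> = 1"

definition is_supp_proj :: "nat \<Rightarrow> complex mat \<Rightarrow> complex mat \<Rightarrow> bool" where
  "is_supp_proj n \<rho> P \<longleftrightarrow> P \<in> carrier_mat n n \<and> P * P = P \<and> adj P = P \<and>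
     (\<lambda>v. P *\<^sub>v v) ` carrier_vec n = (\<lambda>v. \<rho> *\<^sub>v v) ` carrier_vec n"

definition supp_proj :: "nat \<Rightarrow> complex mat \<Rightarrow> complex mat" where
  "supp_proj n \<rho> = (SOME P. is_supp_proj n \<rho> P)"

definition mat_convex :: "complex mat set \<Rightarrow> bool" where
  "mat_convex S \<longleftrightarrow> (\<forall>A\<in>S. \<forall>B\<in>S. \<forall>t::real. 0 \<le> t \<and> t \<le> 1 \<longrightarrow>
      (complex_of_real t \<cdot>\<^sub>m A + complex_of_real (1 - t) \<cdot>\<^sub>m B) \<in> S)"

definition mat_closed :: "nat \<Rightarrow> complex mat set \<Rightarrow> bool" where
  "mat_closed n S \<longleftrightarrow> (\<forall>X A. (\<forall>k. X k \<in> S) \<and> A \<in> carrier_mat n n \<and>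
      (\<forall>i<n. \<forall>j<n. (\<lambda>k. X k $$ (i,j)) \<longlonglongrightarrow> A $$ (i,j)) \<longrightarrow> A \<in> S)"

definition free_set :: "nat \<Rightarrow> complex mat set \<Rightarrow> bool" where
  "free_set n S \<longleftrightarrow> (\<forall>\<sigma>\<in>S. density n \<sigma>) \<and> mat_convex S \<and> mat_closed n S"

definition mcone :: "complex mat set \<Rightarrow> complex mat set" where
  "mcone S = {complex_of_real l \<cdot>\<^sub>m \<sigma> | l \<sigma>. 0 \<le> l \<and> \<sigma> \<in> S}"

definition cone_le :: "complex mat set \<Rightarrow> complex mat \<Rightarrow> complex mat \<Rightarrow> bool" where
  "cone_le S A B \<longleftrightarrow> B - A \<in> mcone S"

definition Rmax :: "complex mat set \<Rightarrow> complex mat \<Rightarrow> complex mat \<Rightarrow> ereal" where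
  "Rmax S X Y = Inf (ereal ` {l::real. cone_le S X (complex_of_real l \<cdot>\<^sub>m Y)})"

definition RFF :: "complex mat set \<Rightarrow> complex mat \<Rightarrow> ereal" where
  "RFF S \<rho> = Inf ((\<lambda>\<sigma>. Rmax S \<rho> \<sigma>) ` S)"

definition VF :: "nat \<Rightarrow> complex mat set \<Rightarrow> complex mat \<Rightarrow> real" where
  "VF n S \<rho> = Sup ((\<lambda>\<sigma>. Re (hs (supp_proj n \<rho>) \<sigma>)) ` S)"

definition einv :: "ereal \<Rightarrow> ereal" where
  "einv t = (if t = 0 then \<infinity> else if t = \<infinity> then 0 else ereal (1 / real_of_ereal t))"

definition Hfeas :: "nat \<Rightarrow> complex mat set \<Rightarrow> complex mat \<Rightarrow> ereal \<Rightarrow> complex mat \<Rightarrow> complex mat \<Rightarrow> bool" where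
  "Hfeas n S \<rho> t W Z \<longleftrightarrow>
     loewner_le n (0\<^sub>m n n) W \<and> loewner_le n W Z \<and> loewner_le n Z (1\<^sub>m n) \<and>
     hs W \<rho> = hs Z \<rho> \<and>
     (\<forall>\<sigma>\<in>S. ereal (Re (hs W \<sigma>)) \<le> einv t * ereal (Re (hs Z \<sigma>)))"

definition Hval :: "nat \<Rightarrow> complex mat set \<Rightarrow> complex mat \<Rightarrow> ereal \<Rightarrow> real" where
  "Hval n S \<rho> t = Sup {Re (hs \<rho> W) | W Z. Hfeas n S \<rho> t W Z}"

definition blk :: "nat \<Rightarrow> complex mat \<Rightarrow> nat \<Rightarrow> nat \<Rightarrow> complex mat" where
  "blk n X a b = mat n n (\<lambda>(r,c). X $$ (a*n + r, b*n + c))"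

text \<open>The map \<open>id\<^sub>k \<otimes> E\<close> acting on \<open>M\<^sub>k \<otimes> M\<^sub>n\<close> (block matrices).\<close>
definition ampl :: "nat \<Rightarrow> nat \<Rightarrow> nat \<Rightarrow> (complex mat \<Rightarrow> complex mat) \<Rightarrow> complex mat \<Rightarrow> complex mat" where
  "ampl k n m E X = mat (k*m) (k*m) (\<lambda>(i,j). E (blk n X (i div m) (j div m)) $$ (i mod m, j mod m))"

definition lin_map :: "nat \<Rightarrow> nat \<Rightarrow> (complex mat \<Rightarrow> complex mat) \<Rightarrow> bool" where
  "lin_map n m E \<longleftrightarrow>
     (\<forall>X\<in>carrier_mat n n. E X \<in> carrier_mat m m) \<and>
     (\<forall>X\<in>carrier_mat n n. \<forall>Y\<in>carrier_mat n n. E (X + Y) = E X + E Y) \<and>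
     (\<forall>X\<in>carrier_mat n n. \<forall>c. E (c \<cdot>\<^sub>m X) = c \<cdot>\<^sub>m E X)"

definition CPTNI :: "nat \<Rightarrow> nat \<Rightarrow> (complex mat \<Rightarrow> complex mat) \<Rightarrow> bool" where
  "CPTNI n m E \<longleftrightarrow> lin_map n m E \<and>
     (\<forall>k. \<forall>X. psd (k*n) X \<longrightarrow> psd (k*m) (ampl k n m E X)) \<and>
     (\<forall>X. psd n X \<longrightarrow> Re (mtrace (E X)) \<le> Re (mtrace X))"

definition free_ops :: "nat \<Rightarrow> nat \<Rightarrow> complex mat set \<Rightarrow> complex mat set \<Rightarrow> (complex mat \<Rightarrow> complex mat) set" where
  "free_ops n m F F' = {E. CPTNI n m E \<and>
     (\<forall>\<sigma>\<in>F. \<exists>\<sigma>'\<in>F'. \<exists>p::real. 0 \<le> p \<and> p \<le> 1 \<and> E \<sigma> = complex_of_real p \<cdot>\<^sub>m \<sigma>')}"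

definition Ptrans :: "nat \<Rightarrow> nat \<Rightarrow> complex mat set \<Rightarrow> complex mat set \<Rightarrow> complex mat \<Rightarrow> complex mat \<Rightarrow> real" where
  "Ptrans n m F F' \<rho> \<rho>' = Sup {p. \<exists>E\<in>free_ops n m F F'. E \<rho> = complex_of_real p \<cdot>\<^sub>m \<rho>'}"

end

theory Submission
  imports Defs
begin

definition bf :: "nat \<Rightarrow> complex mat \<Rightarrow> (nat \<Rightarrow> complex) \<Rightarrow> (nat \<Rightarrow> complex) \<Rightarrow> complex" where
  "bf n A u v = (\<Sum>i<n. \<Sum>j<n. cnj (u i) * A $$ (i,j) * v j)"

definition qf :: "nat \<Rightarrow> complex mat \<Rightarrow> (nat \<Rightarrow> complex) \<Rightarrow> complex" where
  "qf n A v = bf n A v v"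

lemma nonneg_complex: "(0::complex) \<le> z \<longleftrightarrow> Im z = 0 \<and> 0 \<le> Re z"
  by (auto simp: less_eq_complex_def)

lemma qf_vec: assumes "A \<in> carrier_mat n n" "v \<in> carrier_vec n"
  shows "conjugate v \<bullet> (A *\<^sub>v v) = qf n A (\<lambda>i. v $ i)"
proof -
  have "conjugate v \<bullet> (A *\<^sub>v v) = (\<Sum>i<n. cnj (v$i) * (\<Sum>j<n. A $$ (i,j) * v $ j))"
    using assms unfolding scalar_prod_def mult_mat_vec_def row_def
    by (auto simp: atLeast0LessThan intro!: sum.cong)
  also have "\<dots> = qf n A (\<lambda>i. v $ i)"
    unfolding qf_def bf_def by (simp add: sum_distrib_left mult.assoc)
  finally show ?thesis .
qed

lemma bf_cong: "(\<And>i. i < n \<Longrightarrow> u i = u' i) \<Longrightarrow> (\<And>i. i < n \<Longrightarrow> v i = v' i) \<Longrightarrow> bf n A u v = bf n A u' v'"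
  unfolding bf_def by (auto intro!: sum.cong)

lemma psd_qf: "psd n A \<longleftrightarrow> A \<in> carrier_mat n n \<and> (\<forall>v. 0 \<le> qf n A v)"
proof
  assume p: "psd n A"
  hence A: "A \<in> carrier_mat n n" by (simp add: psd_def)
  { fix v :: "nat \<Rightarrow> complex"
    have "vec n v \<in> carrier_vec n" by simp
    with p have "0 \<le> conjugate (vec n v) \<bullet> (A *\<^sub>v vec n v)"
      unfolding psd_def Let_def nonneg_complex by blast
    also have "\<dots> = qf n A (\<lambda>i. vec n v $ i)" using qf_vec[OF A] by simp
    also have "\<dots> = qf n A v" unfolding qf_def by (rule bf_cong) auto
    finally have "0 \<le> qf n A v" . }
  with A show "A \<in> carrier_mat n n \<and> (\<forall>v. 0 \<le> qf n A v)" by blast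
next
  assume "A \<in> carrier_mat n n \<and> (\<forall>v. 0 \<le> qf n A v)"
  then show "psd n A" unfolding psd_def Let_def using qf_vec nonneg_complex by metis
qed

lemma bf_support:
  assumes S: "S \<subseteq> {..<n}" and u: "\<And>i. i \<notin> S \<Longrightarrow> u i = 0" and v: "\<And>i. i \<notin> S \<Longrightarrow> v i = 0"
  shows "bf n A u v = (\<Sum>i\<in>S. \<Sum>j\<in>S. cnj (u i) * A $$ (i,j) * v j)"
proof -
  have fS: "finite S" using S finite_subset by blast
  have "bf n A u v = (\<Sum>i\<in>S. \<Sum>j<n. cnj (u i) * A $$ (i,j) * v j)"
    unfolding bf_def by (rule sum.mono_neutral_right) (use S u fS in auto)
  also have "\<dots> = (\<Sum>i\<in>S. \<Sum>j\<in>S. cnj (u i) * A $$ (i,j) * v j)"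
    by (rule sum.cong[OF refl], rule sum.mono_neutral_right) (use S v fS in auto)
  finally show ?thesis .
qed

lemma psd_carrier: "psd n A \<Longrightarrow> A \<in> carrier_mat n n" by (simp add: psd_def)

lemma psd_diag: assumes "psd n A" "i < n" shows "0 \<le> A $$ (i,i)"
proof -
  let ?v = "\<lambda>l. if l = i then (1::complex) else 0"
  have "qf n A ?v = A $$ (i,i)" unfolding qf_def
    by (subst bf_support[of "{i}"]) (use assms in auto)
  thus ?thesis using assms psd_qf by metis
qed

lemma psd_herm: assumes p: "psd n A" and i: "i < n" and j: "j < n"
  shows "A $$ (j,i) = cnj (A $$ (i,j))"
proof (cases "i = j")
  case True
  then show ?thesis using psd_diag[OF p i] by (simp add: complex_eq_iff nonneg_complex)
next
  case False
  define x where "x = A $$ (i,j)"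
  define y where "y = A $$ (j,i)"
  have e: "\<And>a b. qf n A (\<lambda>l. if l = i then a else if l = j then b else 0)
      = cnj a * A$$(i,i) * a + cnj a * x * b + cnj b * y * a + cnj b * A$$(j,j) * b"
    unfolding qf_def x_def y_def
    by (subst bf_support[of "{i,j}"]) (use i j False in \<open>auto simp: algebra_simps\<close>)
  have di: "Im (A$$(i,i)) = 0" and dj: "Im (A$$(j,j)) = 0"
    using psd_diag[OF p i] psd_diag[OF p j] by (auto simp: nonneg_complex)
  have "Im (qf n A (\<lambda>l. if l = i then 1 else if l = j then 1 else 0)) = 0"
    using p psd_qf nonneg_complex by blast
  hence 1: "Im x + Im y = 0" unfolding e using di dj by simp
  have "Im (qf n A (\<lambda>l. if l = i then 1 else if l = j then \<i> else 0)) = 0"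
    using p psd_qf nonneg_complex by blast
  hence 2: "Re x - Re y = 0" unfolding e using di dj by simp
  show ?thesis using 1 2 unfolding x_def[symmetric] y_def[symmetric]
    by (simp add: complex_eq_iff)
qed

definition gram :: "nat \<Rightarrow> nat \<Rightarrow> (nat \<Rightarrow> nat \<Rightarrow> complex) \<Rightarrow> complex mat" where
  "gram n N f = mat n n (\<lambda>(i,j). \<Sum>r<N. f r i * cnj (f r j))"

lemma gram_carrier[simp]: "gram n N f \<in> carrier_mat n n" by (simp add: gram_def)

lemma qf_gram: "qf n (gram n N f) v = (\<Sum>r<N. (\<Sum>i<n. cnj (v i) * f r i) * cnj (\<Sum>i<n. cnj (v i) * f r i))"
proof -
  have "qf n (gram n N f) v = (\<Sum>i<n. \<Sum>j<n. \<Sum>r<N. cnj (v i) * f r i * (cnj (f r j) * v j))"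
    unfolding qf_def bf_def gram_def
    by (auto intro!: sum.cong simp: sum_distrib_left sum_distrib_right mult.assoc)
  also have "\<dots> = (\<Sum>r<N. \<Sum>i<n. \<Sum>j<n. cnj (v i) * f r i * (cnj (f r j) * v j))"
    by (simp add: sum.swap[where A="{..<n}" and B="{..<N}"] sum.swap[where B="{..<N}"])
  also have "\<dots> = (\<Sum>r<N. (\<Sum>i<n. cnj (v i) * f r i) * cnj (\<Sum>i<n. cnj (v i) * f r i))"
    by (simp add: sum_distrib_left sum_distrib_right mult_ac)
  finally show ?thesis .
qed

lemma zcnj_nonneg: "(0::complex) \<le> z * cnj z"
  by (simp add: less_eq_complex_def)

lemma gram_psd: "psd n (gram n N f)"
  unfolding psd_qf qf_gram
  by (simp del: cnj_sum add: sum_nonneg zcnj_nonneg)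

lemma bf_lin2: "bf n A u (\<lambda>i. v i - c * w i) = bf n A u v - c * bf n A u w"
  unfolding bf_def by (simp add: algebra_simps sum_subtractf sum_distrib_left)

lemma bf_lin1: "bf n A (\<lambda>i. v i - c * w i) u = bf n A v u - cnj c * bf n A w u"
  unfolding bf_def by (simp add: algebra_simps sum_subtractf sum_distrib_left)

lemma bf_delta1: "k < n \<Longrightarrow> bf n A (\<lambda>l. if l = k then 1 else 0) v = (\<Sum>j<n. A $$ (k,j) * v j)"
  unfolding bf_def by (simp add: if_distrib if_distribR sum.If_cases cong: if_cong)

lemma bf_delta2: "k < n \<Longrightarrow> bf n A u (\<lambda>l. if l = k then 1 else 0) = (\<Sum>i<n. cnj (u i) * A $$ (i,k))"
  unfolding bf_def by (simp add: if_distrib if_distribR sum.If_cases cong: if_cong)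

lemma bf_minus_mat: "A \<in> carrier_mat n n \<Longrightarrow> B \<in> carrier_mat n n \<Longrightarrow>
   bf n (A - B) u v = bf n A u v - bf n B u v"
  unfolding bf_def by (simp add: algebra_simps sum_subtractf)

lemma psd_zero_row: assumes p: "psd n A" and k: "k < n" and j: "j < n" and a: "A $$ (k,k) = 0"
  shows "A $$ (k,j) = 0"
proof (rule ccontr)
  assume z0: "A $$ (k,j) \<noteq> 0"
  define z where "z = A $$ (k,j)"
  have kj: "k \<noteq> j" using z0 a by auto
  have h: "A $$ (j,k) = cnj z" using psd_herm[OF p k j] z_def by simp
  define t :: real where "t = (Re (A$$(j,j)) + 1) / (2 * (cmod z)^2)"
  have zpos: "cmod z > 0" using z0 z_def by simp
  let ?v = "\<lambda>l. if l = k then - (complex_of_real t * z) else if l = j then 1 else 0"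
  have e: "qf n A ?v = A $$ (j,j) - 2 * complex_of_real t * (z * cnj z)"
    unfolding qf_def
    by (subst bf_support[of "{k,j}"]) (use k j kj in \<open>auto simp: algebra_simps a h z_def[symmetric]\<close>)
  have "0 \<le> Re (qf n A ?v)" using p psd_qf nonneg_complex by blast
  also have "Re (qf n A ?v) = Re (A$$(j,j)) - 2 * t * (cmod z)^2"
    unfolding e by (simp add: complex_mult_cnj cmod_def)
  also have "\<dots> = -1" unfolding t_def using zpos by (simp add: field_simps)
  finally show False by simp
qed

lemma chol_aux: "n - k = d \<Longrightarrow> psd n A \<Longrightarrow> (\<forall>i<n. \<forall>j<n. (i<k \<or> j<k) \<longrightarrow> A$$(i,j) = 0)
   \<Longrightarrow> \<exists>N f. A = gram n N f"
proof (induction d arbitrary: k A)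
  case 0
  have A: "A \<in> carrier_mat n n" using 0 psd_carrier by blast
  show ?case
    by (rule exI[of _ 0], rule exI[of _ "\<lambda>_ _. 0"], rule eq_matI) (use 0 A in \<open>auto simp: gram_def\<close>)
next
  case (Suc d)
  have A: "A \<in> carrier_mat n n" using Suc psd_carrier by blast
  have k: "k < n" using Suc by simp
  have a0: "0 \<le> A $$ (k,k)" using psd_diag[OF Suc(3) k] .
  show ?case
  proof (cases "A $$ (k,k) = 0")
    case True
    have z: "\<forall>i<n. \<forall>j<n. (i<Suc k \<or> j<Suc k) \<longrightarrow> A$$(i,j) = 0"
    proof (intro allI impI)
      fix i j assume ij: "i < n" "j < n" "i < Suc k \<or> j < Suc k"
      show "A $$ (i,j) = 0"
      proof (cases "i < k \<or> j < k")
        case True then show ?thesis using Suc(4) ij by blast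
      next
        case False
        then have "i = k \<or> j = k" using ij by auto
        then show ?thesis
        proof
          assume "i = k" then show ?thesis using psd_zero_row[OF Suc(3) k ij(2) True] by simp
        next
          assume "j = k"
          then show ?thesis using psd_zero_row[OF Suc(3) k ij(1) True] psd_herm[OF Suc(3) ij(1) k] by simp
        qed
      qed
    qed
    have d: "n - Suc k = d" using Suc(2) by simp
    show ?thesis by (rule Suc.IH[OF d Suc(3) z])
  next
    case False
    note ane = False
    define a where "a = A $$ (k,k)"
    define r where "r = Re a"
    have aR: "a = complex_of_real r" using a0 unfolding a_def r_def by (simp add: complex_eq_iff nonneg_complex)
    have ap: "r > 0" using a0 False unfolding a_def r_def by (auto simp: nonneg_complex complex_eq_iff)
    define s where "s = complex_of_real (sqrt r)"
    have "sqrt r * sqrt r = r" using ap by simp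
    then have ss: "s * s = a" unfolding s_def aR by (metis of_real_mult)
    have cs: "cnj s = s" unfolding s_def by simp
    have s0: "s \<noteq> 0" using ss False a_def by auto
    define c where "c = (\<lambda>i. A $$ (i,k) / s)"
    define A' where "A' = A - gram n 1 (\<lambda>_. c)"
    have A': "A' \<in> carrier_mat n n" unfolding A'_def by (rule minus_carrier_mat) simp
    have A'e: "\<And>i j. i < n \<Longrightarrow> j < n \<Longrightarrow> A' $$ (i,j) = A $$ (i,j) - c i * cnj (c j)"
      using A unfolding A'_def gram_def by simp
    have psdA': "psd n A'"
      unfolding psd_qf
    proof (intro conjI allI A')
      fix v
      define T where "T = (\<Sum>j<n. A $$ (k,j) * v j)"
      define t where "t = T / a"
      let ?d = "\<lambda>l. if l = k then 1 else (0::complex)"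
      let ?u = "\<lambda>i. v i - t * ?d i"
      have b1: "bf n A ?d v = T" unfolding T_def using bf_delta1[OF k] .
      have b2: "bf n A v ?d = cnj T" unfolding T_def bf_delta2[OF k] cnj_sum
      proof (rule sum.cong)
        fix i assume "i \<in> {..<n}"
        then have "A $$ (i,k) = cnj (A $$ (k,i))" using psd_herm[OF Suc(3) k] by simp
        then show "cnj (v i) * A $$ (i, k) = cnj (A $$ (k, i) * v i)" by simp
      qed simp
      have b3: "bf n A ?d ?d = a" unfolding bf_delta1[OF k] a_def
        by (simp add: if_distrib sum.If_cases cong: if_cong) (use k in simp)
      have "qf n A ?u = qf n A v - cnj t * T - t * cnj T + cnj t * t * a"
        unfolding qf_def bf_lin1 bf_lin2 b1 b2 b3 by (simp add: algebra_simps)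
      also have "\<dots> = qf n A v - cnj T * T / a"
        unfolding t_def using s0 ss cs by (simp add: field_simps)
      finally have e1: "qf n A ?u = qf n A v - cnj T * T / a" .
      have sc: "(\<Sum>i<n. cnj (v i) * c i) = cnj T / s"
        unfolding T_def c_def cnj_sum sum_divide_distrib
      proof (rule sum.cong)
        fix i assume "i \<in> {..<n}"
        then have "A $$ (i,k) = cnj (A $$ (k,i))" using psd_herm[OF Suc(3) k] by simp
        then show "cnj (v i) * (A $$ (i, k) / s) = cnj (A $$ (k, i) * v i) / s" by simp
      qed simp
      have "qf n A' v = qf n A v - qf n (gram n 1 (\<lambda>_. c)) v"
        unfolding A'_def qf_def by (rule bf_minus_mat[OF A]) simp
      also have "\<dots> = qf n A v - cnj T * T / a"
        unfolding qf_gram sc using ss cs by (simp add: field_simps)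
      finally have "qf n A' v = qf n A ?u" using e1 by simp
      then show "0 \<le> qf n A' v" using Suc(3) psd_qf by metis
    qed
    have zero': "\<forall>i<n. \<forall>j<n. (i<Suc k \<or> j<Suc k) \<longrightarrow> A'$$(i,j) = 0"
    proof (intro allI impI)
      fix i j assume ij: "i < n" "j < n" "i < Suc k \<or> j < Suc k"
      have ci: "i < k \<Longrightarrow> c i = 0" for i using Suc(4) k unfolding c_def by auto
      show "A' $$ (i,j) = 0"
      proof (cases "i < k \<or> j < k")
        case True then show ?thesis using Suc(4) ij ci A'e by auto
      next
        case False
        then have "i = k \<or> j = k" using ij by auto
        then show ?thesis
        proof
          assume ik: "i = k"
          have "c k * cnj (c j) = a * A $$ (k,j) / (s * s)"
            unfolding c_def a_def using cs psd_herm[OF Suc(3) k ij(2)] by simp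
          then show ?thesis using A'e[OF ij(1,2)] ik ss s0 ane by (simp add: a_def)
        next
          assume jk: "j = k"
          have "c i * cnj (c k) = A $$ (i,k) * a / (s * s)"
            unfolding c_def using cs by (simp add: a_def[symmetric] aR)
          then show ?thesis using A'e[OF ij(1,2)] jk ss s0 ane by (simp add: a_def)
        qed
      qed
    qed
    have d': "n - Suc k = d" using Suc(2) by simp
    obtain N f where Nf: "A' = gram n N f" using Suc.IH[OF d' psdA' zero'] by blast
    show ?thesis
    proof (intro exI)
      show "A = gram n (Suc N) (f(N := c))"
      proof (rule eq_matI)
        fix i j assume ij: "i < dim_row (gram n (Suc N) (f(N := c)))" "j < dim_col (gram n (Suc N) (f(N := c)))"
        then have ij': "i < n" "j < n" by (auto simp: gram_def)
        have "A $$ (i,j) = A' $$ (i,j) + c i * cnj (c j)" using A'e[OF ij'] by simp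
        also have "\<dots> = gram n (Suc N) (f(N := c)) $$ (i,j)"
          unfolding Nf gram_def using ij' by simp
        finally show "A $$ (i,j) = gram n (Suc N) (f(N := c)) $$ (i,j)" .
      qed (use A in \<open>auto simp: gram_def\<close>)
    qed
  qed
qed

lemma cholesky: "psd n A \<Longrightarrow> \<exists>N f. A = gram n N f"
  using chol_aux[of n 0 "n"] by auto

lemma mtrace_formula: "A \<in> carrier_mat n n \<Longrightarrow> mtrace A = (\<Sum>i<n. A $$ (i,i))"
  unfolding mtrace_def by simp

lemma hs_formula: assumes "A \<in> carrier_mat n n" "C \<in> carrier_mat n n"
  shows "hs A C = (\<Sum>i<n. \<Sum>j<n. A $$ (i,j) * C $$ (j,i))"
  using assms unfolding hs_def mtrace_def times_mat_def scalar_prod_def row_def col_def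
  by (auto simp: atLeast0LessThan intro!: sum.cong)

lemma hs_comm: assumes "A \<in> carrier_mat n n" "C \<in> carrier_mat n n"
  shows "hs A C = hs C A"
  unfolding hs_formula[OF assms] hs_formula[OF assms(2,1)]
  by (subst sum.swap) (simp add: mult.commute)

lemma hs_gram: assumes "C \<in> carrier_mat n n"
  shows "hs (gram n N f) C = (\<Sum>r<N. qf n C (f r))"
proof -
  have "hs (gram n N f) C = (\<Sum>i<n. \<Sum>j<n. \<Sum>r<N. f r i * cnj (f r j) * C $$ (j,i))"
    unfolding hs_formula[OF gram_carrier assms]
    by (auto intro!: sum.cong simp: sum_distrib_right gram_def)
  also have "\<dots> = (\<Sum>r<N. \<Sum>i<n. \<Sum>j<n. f r i * cnj (f r j) * C $$ (j,i))"
    by (simp add: sum.swap[where B="{..<N}"])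
  also have "\<dots> = (\<Sum>r<N. qf n C (f r))"
    unfolding qf_def bf_def
    by (rule sum.cong[OF refl], subst sum.swap) (simp add: mult_ac)
  finally show ?thesis .
qed

lemma hs_psd: assumes "psd n A" "psd n C" shows "0 \<le> hs A C"
proof -
  obtain N f where A: "A = gram n N f" using cholesky[OF assms(1)] by blast
  show ?thesis unfolding A hs_gram[OF psd_carrier[OF assms(2)]]
    using assms(2) psd_qf by (auto intro!: sum_nonneg)
qed

lemma hs_add1: "A \<in> carrier_mat n n \<Longrightarrow> B \<in> carrier_mat n n \<Longrightarrow> C \<in> carrier_mat n n \<Longrightarrow>
  hs (A + B) C = hs A C + hs B C"
  by (subst hs_formula[of _ n], simp, simp)+ (simp add: algebra_simps sum.distrib)

lemma hs_minus1: "A \<in> carrier_mat n n \<Longrightarrow> B \<in> carrier_mat n n \<Longrightarrow> C \<in> carrier_mat n n \<Longrightarrow>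
  hs (A - B) C = hs A C - hs B C"
  by (subst hs_formula[of _ n], simp add: minus_carrier_mat, simp)+ (simp add: algebra_simps sum_subtractf)

lemma hs_smult1: "A \<in> carrier_mat n n \<Longrightarrow> C \<in> carrier_mat n n \<Longrightarrow>
  hs (c \<cdot>\<^sub>m A) C = c * hs A C"
  by (subst hs_formula[of _ n], simp, simp)+ (simp add: algebra_simps sum_distrib_left)

lemma hs_add2: "A \<in> carrier_mat n n \<Longrightarrow> B \<in> carrier_mat n n \<Longrightarrow> C \<in> carrier_mat n n \<Longrightarrow>
  hs C (A + B) = hs C A + hs C B"
  by (subst hs_formula[of _ n], simp, simp)+ (simp add: algebra_simps sum.distrib)

lemma hs_minus2: "A \<in> carrier_mat n n \<Longrightarrow> B \<in> carrier_mat n n \<Longrightarrow> C \<in> carrier_mat n n \<Longrightarrow>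
  hs C (A - B) = hs C A - hs C B"
  by (subst hs_formula[of _ n], simp, simp add: minus_carrier_mat)+ (simp add: algebra_simps sum_subtractf)

lemma hs_smult2: "A \<in> carrier_mat n n \<Longrightarrow> C \<in> carrier_mat n n \<Longrightarrow>
  hs C (c \<cdot>\<^sub>m A) = c * hs C A"
  by (subst hs_formula[of _ n], simp, simp)+ (simp add: algebra_simps sum_distrib_left)

lemma sum_delta_mult: "(\<Sum>j<(n::nat). (if i = j then 1 else 0) * (y j::complex)) = (if i < n then y i else 0)"
proof -
  have "(\<Sum>j<n. (if i = j then 1 else 0) * y j) = (\<Sum>j<n. if j = i then y j else 0)"
    by (rule sum.cong) auto
  also have "\<dots> = (if i \<in> {..<n} then y i else 0)" using sum.delta[of "{..<n}" i y] by simp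
  finally show ?thesis by simp
qed

lemma hs_one1: "C \<in> carrier_mat n n \<Longrightarrow> hs (1\<^sub>m n) C = mtrace C"
  by (subst hs_formula[of _ n], simp, simp) (simp add: mtrace_formula sum_delta_mult)

lemma hs_zero1: "C \<in> carrier_mat n n \<Longrightarrow> hs (0\<^sub>m n n) C = 0"
  by (subst hs_formula[of _ n], simp, simp) simp

lemma psd_add: "psd n A \<Longrightarrow> psd n B \<Longrightarrow> psd n (A + B)"
  unfolding psd_qf qf_def bf_def
  by (auto simp: algebra_simps sum.distrib intro!: add_nonneg_nonneg)

lemma psd_smult: "psd n A \<Longrightarrow> 0 \<le> c \<Longrightarrow> psd n (complex_of_real c \<cdot>\<^sub>m A)"
proof -
  assume a: "psd n A" "0 \<le> c"
  { fix v
    have "qf n (complex_of_real c \<cdot>\<^sub>m A) v = complex_of_real c * qf n A v"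
      using a psd_carrier[OF a(1)] unfolding qf_def bf_def
      by (auto simp: sum_distrib_left mult_ac intro!: sum.cong)
    moreover have "0 \<le> complex_of_real c * qf n A v"
      using a psd_qf[of n A] by (intro mult_nonneg_nonneg) (auto simp: less_eq_complex_def)
    ultimately have "0 \<le> qf n (complex_of_real c \<cdot>\<^sub>m A) v" by simp }
  then show ?thesis using a psd_carrier[OF a(1)] psd_qf by auto
qed

lemma psd_zero: "psd n (0\<^sub>m n n)"
  unfolding psd_qf qf_def bf_def by auto

lemma psd_trace: "psd n A \<Longrightarrow> 0 \<le> mtrace A"
  using psd_diag[of n A] psd_carrier[of n A] by (auto simp: mtrace_formula intro!: sum_nonneg)

lemma real_of_nonneg: "(0::complex) \<le> z \<Longrightarrow> z = complex_of_real (Re z)"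
  by (simp add: complex_eq_iff nonneg_complex)

lemma loewner_psd: "loewner_le n A B \<Longrightarrow> psd n (B - A)" by (simp add: loewner_le_def)

lemma mult_formula: "A \<in> carrier_mat n k \<Longrightarrow> B \<in> carrier_mat k m \<Longrightarrow> i < n \<Longrightarrow> j < m \<Longrightarrow>
  (A * B) $$ (i,j) = (\<Sum>l<k. A $$ (i,l) * B $$ (l,j))"
  by (simp add: scalar_prod_def atLeast0LessThan)

lemma mv_formula: "A \<in> carrier_mat n k \<Longrightarrow> v \<in> carrier_vec k \<Longrightarrow>
  A *\<^sub>v v = vec n (\<lambda>i. \<Sum>j<k. A $$ (i,j) * v $ j)"
  by (rule eq_vecI) (auto simp: scalar_prod_def atLeast0LessThan)

definition ip :: "nat \<Rightarrow> (nat \<Rightarrow> complex) \<Rightarrow> (nat \<Rightarrow> complex) \<Rightarrow> complex" where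
  "ip m u v = (\<Sum>i<m. cnj (u i) * v i)"

definition projf :: "nat \<Rightarrow> nat \<Rightarrow> (nat \<Rightarrow> nat \<Rightarrow> complex) \<Rightarrow> (nat \<Rightarrow> complex) \<Rightarrow> nat \<Rightarrow> complex" where
  "projf m N f x = (\<lambda>i. \<Sum>r<N. ip m (f r) x * f r i)"

definition orthon :: "nat \<Rightarrow> nat \<Rightarrow> (nat \<Rightarrow> nat \<Rightarrow> complex) \<Rightarrow> bool" where
  "orthon m N f \<longleftrightarrow> (\<forall>r<N. \<forall>s<N. ip m (f r) (f s) = (if r = s then 1 else 0))"

definition Rv :: "nat \<Rightarrow> complex mat \<Rightarrow> (nat \<Rightarrow> complex) \<Rightarrow> nat \<Rightarrow> complex" where
  "Rv m R u = (\<lambda>i. \<Sum>j<m. R $$ (i,j) * u j)"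

lemma ip_cnj: "ip m v u = cnj (ip m u v)"
  unfolding ip_def by (simp add: mult.commute)

lemma ip_diff2: "ip m u (\<lambda>i. v i - w i) = ip m u v - ip m u w"
  unfolding ip_def by (simp add: algebra_simps sum_subtractf)

lemma ip_add2: "ip m u (\<lambda>i. v i + w i) = ip m u v + ip m u w"
  unfolding ip_def by (simp add: algebra_simps sum.distrib)

lemma ip_scale2: "ip m u (\<lambda>i. c * v i) = c * ip m u v"
  unfolding ip_def by (simp add: algebra_simps sum_distrib_left)

lemma ip_div2: "ip m u (\<lambda>i. v i / c) = ip m u v / c"
  unfolding ip_def by (simp add: algebra_simps sum_divide_distrib)

lemma ip_scale1: "ip m (\<lambda>i. v i / c) u = ip m v u / cnj c"
  unfolding ip_def by (simp add: algebra_simps sum_divide_distrib)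

lemma ip_cong: "(\<And>i. i < m \<Longrightarrow> u i = u' i) \<Longrightarrow> (\<And>i. i < m \<Longrightarrow> v i = v' i) \<Longrightarrow> ip m u v = ip m u' v'"
  unfolding ip_def by (auto intro!: sum.cong)

lemma ip_sum2: "ip m u (\<lambda>i. \<Sum>r<N. c r * f r i) = (\<Sum>r<N. c r * ip m u (f r))"
  unfolding ip_def by (simp add: sum_distrib_left sum.swap[where B="{..<N}"] mult_ac)

lemma ip_projf: "ip m u (projf m N f x) = (\<Sum>r<N. ip m (f r) x * ip m u (f r))"
  unfolding projf_def by (rule ip_sum2)

lemma ip_self_nonneg: "0 \<le> ip m u u"
  unfolding ip_def by (intro sum_nonneg) (simp add: less_eq_complex_def)

lemma ip_self_zero: "ip m u u = 0 \<Longrightarrow> i < m \<Longrightarrow> u i = 0"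
proof -
  assume z: "ip m u u = 0" and i: "i < m"
  have "(\<Sum>j<m. (cmod (u j))^2) = Re (ip m u u)"
    unfolding ip_def by (simp add: cmod_def power2_eq_square)
  hence s0: "(\<Sum>j<m. (cmod (u j))^2) = 0" using z by simp
  have "(cmod (u i))^2 = 0"
    using sum_nonneg_eq_0_iff[of "{..<m}" "\<lambda>j. (cmod (u j))^2"] s0 i by auto
  thus "u i = 0" by simp
qed

lemma orthon_step:
  assumes on: "orthon m N f"
    and ort: "\<And>s. s < N \<Longrightarrow> ip m (f s) g = 0" and nrm: "ip m g g = 1"
  shows "orthon m (Suc N) (f(N := g))"
  unfolding orthon_def
proof (intro allI impI)
  fix r s assume r: "r < Suc N" and s: "s < Suc N"
  show "ip m ((f(N := g)) r) ((f(N := g)) s) = (if r = s then 1 else 0)"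
  proof (cases "r = N"; cases "s = N")
    assume "r \<noteq> N" "s \<noteq> N" then show ?thesis using on r s by (simp add: orthon_def)
  next
    assume "r = N" "s \<noteq> N" then show ?thesis using ort[of s] s ip_cnj[of m g "f s"] by simp
  next
    assume "r \<noteq> N" "s = N" then show ?thesis using ort[of r] r by simp
  next
    assume "r = N" "s = N" then show ?thesis using nrm by simp
  qed
qed

lemma gs_step_invariant:
  assumes km: "k \<le> m"
  shows "\<exists>N f. orthon m N f \<and> (\<forall>r<N. \<exists>u. \<forall>i<m. f r i = Rv m R u i)
      \<and> (\<forall>j<k. \<forall>i<m. projf m N f (\<lambda>l. R $$ (l,j)) i = R $$ (i,j))"
  using km
proof (induction k)
  case 0
  show ?case by (rule exI[of _ 0]) (auto simp: orthon_def)
next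
  case (Suc k)
  then obtain N f where on: "orthon m N f" and rng: "\<forall>r<N. \<exists>u. \<forall>i<m. f r i = Rv m R u i"
    and fix_: "\<forall>j<k. \<forall>i<m. projf m N f (\<lambda>l. R $$ (l,j)) i = R $$ (i,j)" by auto
  from rng obtain U where U: "\<And>r i. r < N \<Longrightarrow> i < m \<Longrightarrow> f r i = Rv m R (U r) i" by metis
  define w where "w = (\<lambda>l. R $$ (l,k))"
  define p where "p = projf m N f w"
  define rr where "rr = (\<lambda>i. w i - p i)"
  have ipfr: "ip m (f s) rr = 0" if s: "s < N" for s
  proof -
    have "ip m (f s) p = (\<Sum>t<N. ip m (f t) w * ip m (f s) (f t))" unfolding p_def by (rule ip_projf)
    also have "\<dots> = (\<Sum>t<N. if t = s then ip m (f s) w else 0)"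
      by (rule sum.cong) (use on s in \<open>auto simp: orthon_def\<close>)
    also have "\<dots> = ip m (f s) w" using s by simp
    finally show ?thesis unfolding rr_def ip_diff2 by simp
  qed
  have iprf: "ip m rr (f s) = 0" if "s < N" for s using ipfr[OF that] ip_cnj[of m rr "f s"] by simp
  have iprp: "ip m rr p = 0" unfolding p_def ip_projf using iprf by simp
  have rrw: "ip m rr w = ip m rr rr"
  proof -
    have "ip m rr w = ip m rr (\<lambda>i. rr i + p i)" by (rule ip_cong) (auto simp: rr_def)
    thus ?thesis unfolding ip_add2 iprp by simp
  qed
  have prj_lin: "projf m N f (\<lambda>l. x l + c * y l) i = projf m N f x i + c * projf m N f y i" for x y c i
    unfolding projf_def ip_add2 ip_scale2 by (simp add: algebra_simps sum.distrib sum_distrib_left)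
  show ?case
  proof (cases "ip m rr rr = 0")
    case True
    have rr0: "\<And>i. i < m \<Longrightarrow> rr i = 0" using ip_self_zero[OF True] .
    show ?thesis
    proof (intro exI conjI)
      show "orthon m N f" by fact
      show "\<forall>r<N. \<exists>u. \<forall>i<m. f r i = Rv m R u i" by fact
      show "\<forall>j<Suc k. \<forall>i<m. projf m N f (\<lambda>l. R $$ (l, j)) i = R $$ (i, j)"
      proof (intro allI impI)
        fix j i assume j: "j < Suc k" and i: "i < m"
        show "projf m N f (\<lambda>l. R $$ (l, j)) i = R $$ (i, j)"
        proof (cases "j < k")
          case True then show ?thesis using fix_ i by blast
        next
          case False
          then have "j = k" using j by simp
          then show ?thesis using rr0[OF i] unfolding rr_def p_def w_def by simp
        qed
      qed
    qed
  next
    case False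
    note rrne = False
    define nr where "nr = Re (ip m rr rr)"
    have nrR: "ip m rr rr = complex_of_real nr" unfolding nr_def using ip_self_nonneg[of m rr]
      by (simp add: complex_eq_iff nonneg_complex)
    have nrp: "nr > 0" using False nrR ip_self_nonneg[of m rr] by (auto simp: nonneg_complex)
    define sq where "sq = complex_of_real (sqrt nr)"
    have "sqrt nr * sqrt nr = nr" using nrp by simp
    then have sqsq: "sq * sq = ip m rr rr" unfolding sq_def nrR by (metis of_real_mult)
    have csq: "cnj sq = sq" unfolding sq_def by simp
    have sq0: "sq \<noteq> 0" using sqsq False by auto
    define g where "g = (\<lambda>i. rr i / sq)"
    have ort: "ip m (f s) g = 0" if "s < N" for s
      unfolding g_def using ipfr[OF that] ip_scale2[of m "f s" "1/sq" rr] by (simp add: divide_inverse mult.commute)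
    have nrm: "ip m g g = 1"
    proof -
      have "ip m g g = ip m rr rr / sq / cnj sq"
        unfolding g_def ip_scale1 ip_div2 ..
      thus ?thesis using sqsq csq False by simp
    qed
    have grng: "\<exists>u. \<forall>i<m. g i = Rv m R u i"
    proof
      define u where "u = (\<lambda>j. ((if j = k then 1 else 0) - (\<Sum>t<N. ip m (f t) w * U t j)) / sq)"
      show "\<forall>i<m. g i = Rv m R u i"
      proof (intro allI impI)
        fix i assume i: "i < m"
        have "Rv m R u i = (\<Sum>j<m. R $$ (i,j) * (if j = k then 1 else 0)) / sq
            - (\<Sum>t<N. ip m (f t) w * (\<Sum>j<m. R $$ (i,j) * U t j)) / sq"
          unfolding Rv_def u_def
          by (simp add: algebra_simps sum_subtractf sum_divide_distrib sum_distrib_left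
              sum.swap[where B="{..<N}"] diff_divide_distrib)
        also have "(\<Sum>j<m. R $$ (i,j) * (if j = k then 1 else 0)) = w i"
          unfolding w_def using Suc(2) by (simp add: if_distrib cong: if_cong)
        also have "(\<Sum>t<N. ip m (f t) w * (\<Sum>j<m. R $$ (i,j) * U t j)) = p i"
          unfolding p_def projf_def using U[OF _ i] by (auto simp: Rv_def intro!: sum.cong)
        finally show "g i = Rv m R u i" unfolding g_def rr_def by (simp add: diff_divide_distrib)
      qed
    qed
    show ?thesis
    proof (intro exI conjI)
      show "orthon m (Suc N) (f(N := g))" by (rule orthon_step[OF on ort nrm])
      show "\<forall>r<Suc N. \<exists>u. \<forall>i<m. (f(N := g)) r i = Rv m R u i"
      proof (intro allI impI)
        fix r assume r: "r < Suc N"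
        show "\<exists>u. \<forall>i<m. (f(N := g)) r i = Rv m R u i"
        proof (cases "r = N")
          case True then show ?thesis using grng by simp
        next
          case False then show ?thesis using rng r by simp
        qed
      qed
      have pf: "projf m (Suc N) (f(N := g)) x i = projf m N f x i + ip m g x * g i" for x i
        unfolding projf_def by simp
      show "\<forall>j<Suc k. \<forall>i<m. projf m (Suc N) (f(N := g)) (\<lambda>l. R $$ (l, j)) i = R $$ (i, j)"
      proof (intro allI impI)
        fix j i assume j: "j < Suc k" and i: "i < m"
        show "projf m (Suc N) (f(N := g)) (\<lambda>l. R $$ (l, j)) i = R $$ (i, j)"
        proof (cases "j < k")
          case True
          have "ip m rr (\<lambda>l. R $$ (l,j)) = ip m rr (projf m N f (\<lambda>l. R $$ (l,j)))"
            by (rule ip_cong) (use fix_ True in auto)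
          also have "\<dots> = 0" unfolding ip_projf using iprf by simp
          finally have "ip m g (\<lambda>l. R $$ (l,j)) = 0" unfolding g_def ip_scale1 by simp
          then show ?thesis unfolding pf using fix_ True i by simp
        next
          case False
          then have jk: "j = k" using j by simp
          have "ip m g w * g i = (ip m rr rr / cnj sq) * (rr i / sq)"
            unfolding g_def ip_scale1 rrw by simp
          also have "\<dots> = rr i" using sqsq csq rrne sq0 by (simp add: field_simps)
          finally have "ip m g w * g i = rr i" .
          then show ?thesis unfolding pf jk w_def[symmetric] p_def[symmetric]
            by (simp add: rr_def w_def)
        qed
      qed
    qed
  qed
qed

lemma adj_index: "A \<in> carrier_mat m m \<Longrightarrow> i < m \<Longrightarrow> j < m \<Longrightarrow> adj A $$ (i,j) = cnj (A $$ (j,i))"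
  unfolding adj_def by simp

lemma adj_carrier: "A \<in> carrier_mat m m \<Longrightarrow> adj A \<in> carrier_mat m m"
  unfolding adj_def by simp

lemma idem_herm_psd: assumes A: "A \<in> carrier_mat m m" and AA: "A * A = A" and h: "adj A = A"
  shows "psd m A"
proof -
  have "A = gram m m (\<lambda>l i. A $$ (i,l))"
  proof (rule eq_matI)
    fix i j assume ij: "i < dim_row (gram m m (\<lambda>l i. A $$ (i,l)))" "j < dim_col (gram m m (\<lambda>l i. A $$ (i,l)))"
    then have i: "i < m" and j: "j < m" by (auto simp: gram_def)
    have "A $$ (i,j) = (A * A) $$ (i,j)" using AA by simp
    also have "\<dots> = (\<Sum>l<m. A $$ (i,l) * A $$ (l,j))" using mult_formula[OF A A i j] .
    also have "\<dots> = (\<Sum>l<m. A $$ (i,l) * cnj (A $$ (j,l)))"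
    proof (rule sum.cong[OF refl])
      fix l assume "l \<in> {..<m}"
      then have "A $$ (l,j) = cnj (A $$ (j,l))" using adj_index[OF A, of l j] h j by simp
      then show "A $$ (i,l) * A $$ (l,j) = A $$ (i,l) * cnj (A $$ (j,l))" by simp
    qed
    finally show "A $$ (i,j) = gram m m (\<lambda>l i. A $$ (i,l)) $$ (i,j)" using i j by (simp add: gram_def)
  qed (use A in \<open>auto simp: gram_def\<close>)
  then show ?thesis using gram_psd[of m m "\<lambda>l i. A $$ (i,l)"] by simp
qed

lemma gram_mult_orthon: assumes on: "orthon m N f"
  shows "gram m N f * gram m N f = gram m N f"
proof (rule eq_matI)
  fix i j assume "i < dim_row (gram m N f)" "j < dim_col (gram m N f)"
  then have i: "i < m" and j: "j < m" by (auto simp: gram_def)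
  have "(gram m N f * gram m N f) $$ (i,j) = (\<Sum>l<m. (\<Sum>r<N. f r i * cnj (f r l)) * (\<Sum>s<N. f s l * cnj (f s j)))"
    using mult_formula[OF gram_carrier gram_carrier i j] i j by (simp add: gram_def)
  also have "\<dots> = (\<Sum>l<m. \<Sum>r<N. \<Sum>s<N. f r i * cnj (f s j) * (cnj (f r l) * f s l))"
    by (simp add: sum_distrib_left sum_distrib_right mult_ac)
  also have "\<dots> = (\<Sum>r<N. \<Sum>l<m. \<Sum>s<N. f r i * cnj (f s j) * (cnj (f r l) * f s l))"
    by (rule sum.swap)
  also have "\<dots> = (\<Sum>r<N. \<Sum>s<N. \<Sum>l<m. f r i * cnj (f s j) * (cnj (f r l) * f s l))"
    by (rule sum.cong[OF refl], rule sum.swap)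
  also have "\<dots> = (\<Sum>r<N. \<Sum>s<N. f r i * cnj (f s j) * ip m (f r) (f s))"
    unfolding ip_def by (simp add: sum_distrib_left)
  also have "\<dots> = (\<Sum>r<N. \<Sum>s<N. if s = r then f r i * cnj (f r j) else 0)"
    by (rule sum.cong[OF refl], rule sum.cong[OF refl]) (use on in \<open>auto simp: orthon_def\<close>)
  also have "\<dots> = gram m N f $$ (i,j)" using i j by (simp add: gram_def)
  finally show "(gram m N f * gram m N f) $$ (i,j) = gram m N f $$ (i,j)" .
qed (auto simp: gram_def)

lemma adj_gram: "adj (gram m N f) = gram m N f"
  by (rule eq_matI) (auto simp: adj_def gram_def mult.commute)

lemma supp_proj_exists: assumes R: "R \<in> carrier_mat m m" shows "\<exists>P. is_supp_proj m R P"
proof -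
  obtain N f where on: "orthon m N f" and rng: "\<forall>r<N. \<exists>u. \<forall>i<m. f r i = Rv m R u i"
    and fx: "\<forall>j<m. \<forall>i<m. projf m N f (\<lambda>l. R $$ (l,j)) i = R $$ (i,j)"
    using gs_step_invariant[of m m R] by auto
  from rng obtain U where U: "\<And>r i. r < N \<Longrightarrow> i < m \<Longrightarrow> f r i = Rv m R (U r) i" by metis
  define P where "P = gram m N f"
  have P: "P \<in> carrier_mat m m" unfolding P_def by simp
  have Pv: "P *\<^sub>v v = vec m (projf m N f (\<lambda>j. v $ j))" if v: "v \<in> carrier_vec m" for v
  proof -
    have "P *\<^sub>v v = vec m (\<lambda>i. \<Sum>j<m. P $$ (i,j) * v $ j)" by (rule mv_formula[OF P v])
    also have "\<dots> = vec m (projf m N f (\<lambda>j. v $ j))"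
    proof (rule eq_vecI)
      fix i assume "i < dim_vec (vec m (projf m N f (\<lambda>j. v $ j)))"
      then have i: "i < m" by simp
      have "(\<Sum>j<m. P $$ (i,j) * v $ j) = (\<Sum>j<m. \<Sum>r<N. f r i * cnj (f r j) * v $ j)"
        unfolding P_def using i by (auto simp: gram_def sum_distrib_right intro!: sum.cong)
      also have "\<dots> = (\<Sum>r<N. \<Sum>j<m. f r i * cnj (f r j) * v $ j)" by (rule sum.swap)
      also have "\<dots> = projf m N f (\<lambda>j. v $ j) i"
        unfolding projf_def ip_def by (simp add: sum_distrib_right sum_distrib_left mult_ac)
      finally show "vec m (\<lambda>i. \<Sum>j<m. P $$ (i,j) * v $ j) $ i = vec m (projf m N f (\<lambda>j. v $ j)) $ i"
        using i by simp
    qed simp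
    finally show ?thesis .
  qed
  have rngeq: "(\<lambda>v. P *\<^sub>v v) ` carrier_vec m = (\<lambda>v. R *\<^sub>v v) ` carrier_vec m"
  proof
    show "(\<lambda>v. P *\<^sub>v v) ` carrier_vec m \<subseteq> (\<lambda>v. R *\<^sub>v v) ` carrier_vec m"
    proof clarify
      fix v :: "complex vec" assume v: "v \<in> carrier_vec m"
      define u where "u = vec m (\<lambda>j. \<Sum>r<N. ip m (f r) (\<lambda>j. v $ j) * U r j)"
      have uc: "u \<in> carrier_vec m" unfolding u_def by simp
      have key: "projf m N f (\<lambda>j. v $ j) i = (\<Sum>j<m. R $$ (i, j) * u $ j)" if i: "i < m" for i
      proof -
        have "projf m N f (\<lambda>j. v $ j) i = (\<Sum>r<N. ip m (f r) (\<lambda>j. v $ j) * Rv m R (U r) i)"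
          unfolding projf_def using U[OF _ i] by (auto intro!: sum.cong)
        also have "\<dots> = (\<Sum>j<m. R $$ (i, j) * u $ j)"
          unfolding Rv_def u_def
          by (simp add: sum_distrib_left sum_distrib_right mult_ac sum.swap[where B="{..<N}"])
        finally show ?thesis .
      qed
      have "P *\<^sub>v v = R *\<^sub>v u"
        unfolding Pv[OF v] mv_formula[OF R uc] by (rule eq_vecI) (auto simp: key)
      moreover have "u \<in> carrier_vec m" unfolding u_def by simp
      ultimately show "P *\<^sub>v v \<in> (\<lambda>v. R *\<^sub>v v) ` carrier_vec m" by blast
    qed
    show "(\<lambda>v. R *\<^sub>v v) ` carrier_vec m \<subseteq> (\<lambda>v. P *\<^sub>v v) ` carrier_vec m"
    proof clarify
      fix v :: "complex vec" assume v: "v \<in> carrier_vec m"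
      have Rvc: "R *\<^sub>v v \<in> carrier_vec m" using R v by simp
      have "P *\<^sub>v (R *\<^sub>v v) = R *\<^sub>v v"
        unfolding Pv[OF Rvc]
      proof (rule eq_vecI)
        fix i assume "i < dim_vec (R *\<^sub>v v)"
        then have i: "i < m" using R by simp
        have "projf m N f (\<lambda>j. (R *\<^sub>v v) $ j) i = projf m N f (\<lambda>l. \<Sum>j<m. v $ j * R $$ (l,j)) i"
          unfolding projf_def using R v
          by (intro sum.cong[OF refl] arg_cong2[where f="(*)"] ip_cong refl)
             (auto simp: mv_formula mult.commute)
        also have "\<dots> = (\<Sum>j<m. v $ j * projf m N f (\<lambda>l. R $$ (l,j)) i)"
          unfolding projf_def ip_sum2
          by (simp add: sum_distrib_left sum_distrib_right sum.swap[where B="{..<N}"] mult_ac)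
        also have "\<dots> = (\<Sum>j<m. v $ j * R $$ (i,j))"
          using fx i by simp
        also have "\<dots> = (R *\<^sub>v v) $ i" using R v i by (simp add: mv_formula mult.commute)
        finally show "vec m (projf m N f (\<lambda>j. (R *\<^sub>v v) $ j)) $ i = (R *\<^sub>v v) $ i" using i by simp
      qed (use R in simp)
      then show "R *\<^sub>v v \<in> (\<lambda>v. P *\<^sub>v v) ` carrier_vec m" using Rvc by (metis image_eqI)
    qed
  qed
  have "is_supp_proj m R P"
    unfolding is_supp_proj_def
    using P gram_mult_orthon[OF on] adj_gram rngeq unfolding P_def by simp
  then show ?thesis by blast
qed

lemma supp_proj_is: "R \<in> carrier_mat m m \<Longrightarrow> is_supp_proj m R (supp_proj m R)"
  unfolding supp_proj_def using supp_proj_exists by (rule someI_ex)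

lemma proj_psd: "is_supp_proj m R P \<Longrightarrow> psd m P"
  unfolding is_supp_proj_def using idem_herm_psd by blast

lemma proj_compl_psd: assumes "is_supp_proj m R P" shows "psd m (1\<^sub>m m - P)"
proof -
  have P: "P \<in> carrier_mat m m" and PP: "P * P = P" and h: "adj P = P"
    using assms unfolding is_supp_proj_def by auto
  have Q: "1\<^sub>m m - P \<in> carrier_mat m m" using P by (simp add: minus_carrier_mat)
  have "(1\<^sub>m m - P) * (1\<^sub>m m - P) = 1\<^sub>m m * (1\<^sub>m m - P) - P * (1\<^sub>m m - P)"
    by (rule minus_mult_distrib_mat) (use P Q in auto)
  also have "P * (1\<^sub>m m - P) = P * 1\<^sub>m m - P * P"
    by (rule mult_minus_distrib_mat[of P m m]) (use P in auto)
  also have "\<dots> = 0\<^sub>m m m" using P PP by simp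
  also have "1\<^sub>m m * (1\<^sub>m m - P) - 0\<^sub>m m m = 1\<^sub>m m - P"
    unfolding left_mult_one_mat[OF Q] by (rule eq_matI) (use P in auto)
  finally have QQ: "(1\<^sub>m m - P) * (1\<^sub>m m - P) = 1\<^sub>m m - P" .
  have hQ: "adj (1\<^sub>m m - P) = 1\<^sub>m m - P"
  proof (rule eq_matI)
    fix i j assume "i < dim_row (1\<^sub>m m - P)" "j < dim_col (1\<^sub>m m - P)"
    then have i: "i < m" and j: "j < m" using P by auto
    have "P $$ (i,j) = cnj (P $$ (j,i))" using adj_index[OF P i j] h by simp
    then show "adj (1\<^sub>m m - P) $$ (i,j) = (1\<^sub>m m - P) $$ (i,j)"
      using i j P by (simp add: adj_def)
  qed (use P in \<open>auto simp: adj_def\<close>)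
  show ?thesis by (rule idem_herm_psd[OF Q QQ hQ])
qed

lemma proj_fix: assumes pr: "is_supp_proj m R P" and R: "R \<in> carrier_mat m m"
  shows "P * R = R"
proof -
  have P: "P \<in> carrier_mat m m" and PP: "P * P = P"
    and rng: "(\<lambda>v. P *\<^sub>v v) ` carrier_vec m = (\<lambda>v. R *\<^sub>v v) ` carrier_vec m"
    using pr unfolding is_supp_proj_def by auto
  show ?thesis
  proof (rule eq_matI)
    fix i j assume "i < dim_row R" "j < dim_col R"
    then have i: "i < m" and j: "j < m" using R by auto
    define e where "e = (unit_vec m j :: complex vec)"
    have e: "e \<in> carrier_vec m" unfolding e_def by simp
    have "R *\<^sub>v e \<in> (\<lambda>v. P *\<^sub>v v) ` carrier_vec m" using rng e by blast
    then obtain v where v: "v \<in> carrier_vec m" and Re: "R *\<^sub>v e = P *\<^sub>v v" by blast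
    have "P *\<^sub>v (P *\<^sub>v v) = (P * P) *\<^sub>v v" by (rule assoc_mult_mat_vec[OF P P v, symmetric])
    then have "P *\<^sub>v (R *\<^sub>v e) = R *\<^sub>v e"
      unfolding Re PP by simp
    moreover have "(P * R) *\<^sub>v e = P *\<^sub>v (R *\<^sub>v e)" by (rule assoc_mult_mat_vec[OF P R e])
    moreover have "((P * R) *\<^sub>v e) $ i = (P * R) $$ (i,j)"
    proof -
      have PR: "P * R \<in> carrier_mat m m" using P R by simp
      have "((P * R) *\<^sub>v e) $ i = (\<Sum>l<m. (P * R) $$ (i,l) * e $ l)"
        using mv_formula[OF PR e] i by simp
      also have "\<dots> = (\<Sum>l<m. if l = j then (P * R) $$ (i,l) else 0)"
        by (rule sum.cong) (auto simp: e_def unit_vec_def)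
      also have "\<dots> = (P * R) $$ (i,j)" using j by simp
      finally show ?thesis .
    qed
    moreover have "(R *\<^sub>v e) $ i = R $$ (i,j)" using R i j by (simp add: e_def)
    ultimately show "(P * R) $$ (i,j) = R $$ (i,j)" by simp
  qed (use P R in auto)
qed

lemma sum_blocks: "(\<Sum>i<k*m. (g::nat \<Rightarrow> 'a::comm_monoid_add) i) = (\<Sum>a<k. \<Sum>r<m. g (a*m + r))"
proof -
  have e: "(\<Sum>i\<in>{a*m..<a*m+m}. g i) = (\<Sum>r<m. g (a*m + r))" for a
    using sum.shift_bounds_nat_ivl[of g 0 "a*m" m] by (simp add: add.commute atLeast0LessThan)
  show ?thesis using sum.nat_group[of "\<lambda>i. g i" m k] by (simp add: e)
qed

lemma qf_blocks: "qf (k*m) A v = (\<Sum>a<k. \<Sum>r<m. \<Sum>b<k. \<Sum>s<m.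
    cnj (v (a*m+r)) * A $$ (a*m+r, b*m+s) * v (b*m+s))"
  unfolding qf_def bf_def sum_blocks ..

lemma div_mod_block: "r < (m::nat) \<Longrightarrow> (a*m + r) div m = a \<and> (a*m + r) mod m = r"
  by auto

lemma block_lt: "a < k \<Longrightarrow> r < (m::nat) \<Longrightarrow> a*m + r < k*m"
proof -
  assume "a < k" "r < m"
  then have "a*m + r < a*m + m" by simp
  also have "\<dots> = Suc a * m" by simp
  also have "\<dots> \<le> k * m" using \<open>a < k\<close> by (intro mult_right_mono) auto
  finally show ?thesis .
qed

lemma kron_psd:
  assumes T: "psd k T" and S: "psd m S"
  shows "psd (k*m) (mat (k*m) (k*m) (\<lambda>(i,j). T $$ (i div m, j div m) * S $$ (i mod m, j mod m)))"
    (is "psd _ ?K")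
proof -
  obtain N h where Sg: "S = gram m N h" using cholesky[OF S] by blast
  { fix v
    define u where "u = (\<lambda>q a. \<Sum>s<m. cnj (h q s) * v (a*m + s))"
    have "qf (k*m) ?K v = (\<Sum>a<k. \<Sum>r<m. \<Sum>b<k. \<Sum>s<m.
         cnj (v (a*m+r)) * (T $$ (a,b) * (\<Sum>q<N. h q r * cnj (h q s))) * v (b*m+s))"
      unfolding qf_blocks Sg
      by (intro sum.cong refl) (auto simp: block_lt gram_def)
    also have "\<dots> = (\<Sum>q<N. \<Sum>a<k. \<Sum>b<k. cnj (u q a) * T $$ (a,b) * u q b)"
      unfolding u_def
      by (simp add: sum_distrib_left sum_distrib_right mult_ac sum.swap[of _ "{..<N}"]
          sum.swap[of _ "{..<m}" "{..<k}"])
    also have "\<dots> = (\<Sum>q<N. qf k T (u q))" unfolding qf_def bf_def ..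
    finally have "0 \<le> qf (k*m) ?K v" using T psd_qf by (auto intro!: sum_nonneg)
  }
  then show ?thesis unfolding psd_qf by simp
qed

lemma blk_carrier[simp]: "blk n X a b \<in> carrier_mat n n" by (simp add: blk_def)

lemma partial_psd:
  assumes W: "psd n W" and X: "psd (k*n) X"
  shows "psd k (mat k k (\<lambda>(a,b). hs W (blk n X a b)))" (is "psd _ ?T")
proof -
  obtain N g where Wg: "W = gram n N g" using cholesky[OF W] by blast
  { fix y
    define w where "w = (\<lambda>p i. y (i div n) * g p (i mod n))"
    have hsW: "hs W (blk n X a b) = (\<Sum>c<n. \<Sum>d<n. (\<Sum>p<N. g p c * cnj (g p d)) * X $$ (a*n+d, b*n+c))"
      for a b
      unfolding hs_formula[OF psd_carrier[OF W] blk_carrier]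
      by (intro sum.cong refl) (simp add: Wg gram_def blk_def)
    have "qf k ?T y = (\<Sum>a<k. \<Sum>b<k. cnj (y a) *
        (\<Sum>c<n. \<Sum>d<n. (\<Sum>p<N. g p c * cnj (g p d)) * X $$ (a*n+d, b*n+c)) * y b)"
      unfolding qf_def bf_def
      by (intro sum.cong refl) (simp add: hsW)
    also have "\<dots> = (\<Sum>p<N. \<Sum>c<n. \<Sum>d<n. \<Sum>a<k. \<Sum>b<k.
         cnj (y a) * g p c * cnj (g p d) * X $$ (a*n+d, b*n+c) * y b)"
      by (simp add: sum_distrib_left sum_distrib_right mult_ac sum.swap[of _ "{..<N}"]
          sum.swap[of _ "{..<k}" "{..<n}"])
    also have "\<dots> = (\<Sum>p<N. \<Sum>d<n. \<Sum>c<n. \<Sum>a<k. \<Sum>b<k.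
         cnj (y a) * g p c * cnj (g p d) * X $$ (a*n+d, b*n+c) * y b)"
      by (intro sum.cong refl sum.swap)
    also have "\<dots> = (\<Sum>p<N. qf (k*n) X (w p))"
      unfolding qf_blocks
      by (rule sum.cong[OF refl])
         (simp add: w_def sum_distrib_left sum_distrib_right mult_ac sum.swap[of _ "{..<k}" "{..<n}"])
    finally have "0 \<le> qf k ?T y" using X psd_qf by (auto intro!: sum_nonneg)
  }
  then show ?thesis unfolding psd_qf by simp
qed

definition mpE :: "complex mat \<Rightarrow> complex mat \<Rightarrow> complex mat \<Rightarrow> complex mat \<Rightarrow> complex mat \<Rightarrow> complex mat" where
  "mpE W S V T X = hs W X \<cdot>\<^sub>m S + hs V X \<cdot>\<^sub>m T"

lemma mpE_carrier: "S \<in> carrier_mat m m \<Longrightarrow> T \<in> carrier_mat m m \<Longrightarrow> mpE W S V T X \<in> carrier_mat m m"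
  unfolding mpE_def by simp

lemma mpE_index: "S \<in> carrier_mat m m \<Longrightarrow> T \<in> carrier_mat m m \<Longrightarrow> i < m \<Longrightarrow> j < m \<Longrightarrow>
  mpE W S V T X $$ (i,j) = hs W X * S $$ (i,j) + hs V X * T $$ (i,j)"
  unfolding mpE_def by simp

lemma mpE_lin: assumes W: "W \<in> carrier_mat n n" and V: "V \<in> carrier_mat n n"
  and S: "S \<in> carrier_mat m m" and T: "T \<in> carrier_mat m m"
  shows "lin_map n m (mpE W S V T)"
  unfolding lin_map_def
proof (intro conjI ballI allI)
  fix X :: "complex mat" assume "X \<in> carrier_mat n n"
  show "mpE W S V T X \<in> carrier_mat m m" using mpE_carrier[OF S T] .
next
  fix X Y :: "complex mat" assume X: "X \<in> carrier_mat n n" and Y: "Y \<in> carrier_mat n n"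
  show "mpE W S V T (X + Y) = mpE W S V T X + mpE W S V T Y"
    by (rule eq_matI) (use S T X Y W V in \<open>auto simp: mpE_index hs_add2 algebra_simps mpE_def\<close>)
next
  fix X :: "complex mat" and c :: complex assume X: "X \<in> carrier_mat n n"
  show "mpE W S V T (c \<cdot>\<^sub>m X) = c \<cdot>\<^sub>m mpE W S V T X"
    by (rule eq_matI) (use S T X W V in \<open>auto simp: mpE_index hs_smult2 algebra_simps mpE_def\<close>)
qed

lemma mpE_cp: assumes W: "psd n W" and V: "psd n V" and S: "psd m S" and T: "psd m T"
  shows "\<forall>k X. psd (k*n) X \<longrightarrow> psd (k*m) (ampl k n m (mpE W S V T) X)"
proof (intro allI impI)
  fix k X assume X: "psd (k*n) X"
  let ?T1 = "mat k k (\<lambda>(a,b). hs W (blk n X a b))"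
  let ?T2 = "mat k k (\<lambda>(a,b). hs V (blk n X a b))"
  let ?K1 = "mat (k*m) (k*m) (\<lambda>(i,j). ?T1 $$ (i div m, j div m) * S $$ (i mod m, j mod m))"
  let ?K2 = "mat (k*m) (k*m) (\<lambda>(i,j). ?T2 $$ (i div m, j div m) * T $$ (i mod m, j mod m))"
  have p1: "psd (k*m) ?K1" by (rule kron_psd[OF partial_psd[OF W X] S])
  have p2: "psd (k*m) ?K2" by (rule kron_psd[OF partial_psd[OF V X] T])
  have Sc: "S \<in> carrier_mat m m" and Tc: "T \<in> carrier_mat m m" using S T psd_carrier by auto
  have "ampl k n m (mpE W S V T) X = ?K1 + ?K2"
  proof (rule eq_matI)
    fix i j assume "i < dim_row (?K1 + ?K2)" "j < dim_col (?K1 + ?K2)"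
    then have i: "i < k*m" and j: "j < k*m" by auto
    have m0: "m > 0" using i by (cases m) auto
    have id: "i div m < k" "j div m < k" using i j by (auto simp: less_mult_imp_div_less)
    have im: "i mod m < m" "j mod m < m" using m0 by auto
    show "ampl k n m (mpE W S V T) X $$ (i,j) = (?K1 + ?K2) $$ (i,j)"
      unfolding ampl_def using i j id im by (simp add: mpE_index[OF Sc Tc])
  qed (auto simp: ampl_def)
  then show "psd (k*m) (ampl k n m (mpE W S V T) X)" using psd_add[OF p1 p2] by simp
qed

lemma mtrace_mpE: assumes S: "S \<in> carrier_mat m m" and T: "T \<in> carrier_mat m m"
  shows "mtrace (mpE W S V T X) = hs W X * mtrace S + hs V X * mtrace T"
  unfolding mtrace_formula[OF mpE_carrier[OF S T]] mtrace_formula[OF S] mtrace_formula[OF T]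
  by (simp add: mpE_index[OF S T] sum.distrib sum_distrib_left)

lemma mpE_tni: assumes W: "W \<in> carrier_mat n n" and Z: "Z \<in> carrier_mat n n"
  and S: "S \<in> carrier_mat m m" and T: "T \<in> carrier_mat m m"
  and tS: "mtrace S = 1" and tT: "mtrace T = 1" and ZI: "psd n (1\<^sub>m n - Z)"
  shows "\<forall>X. psd n X \<longrightarrow> Re (mtrace (mpE W S (Z - W) T X)) \<le> Re (mtrace X)"
proof (intro allI impI)
  fix X assume X: "psd n X"
  have Xc: "X \<in> carrier_mat n n" using X psd_carrier by auto
  have ZW: "Z - W \<in> carrier_mat n n" using Z W by (simp add: minus_carrier_mat)
  have "mtrace (mpE W S (Z - W) T X) = hs W X + hs (Z - W) X"
    using mtrace_mpE[OF S T] tS tT by simp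
  also have "\<dots> = hs Z X" using hs_minus1[OF Z W Xc] by simp
  finally have e: "mtrace (mpE W S (Z - W) T X) = hs Z X" .
  have "0 \<le> hs (1\<^sub>m n - Z) X" by (rule hs_psd[OF ZI X])
  also have "hs (1\<^sub>m n - Z) X = mtrace X - hs Z X"
    using hs_minus1[OF one_carrier_mat Z Xc] hs_one1[OF Xc] by simp
  finally show "Re (mtrace (mpE W S (Z - W) T X)) \<le> Re (mtrace X)" unfolding e
    by (simp add: less_eq_complex_def)
qed

lemma mtrace_smult: "A \<in> carrier_mat n n \<Longrightarrow> mtrace (c \<cdot>\<^sub>m A) = c * mtrace A"
  by (simp add: mtrace_formula[of _ n] sum_distrib_left)

lemma density_carrier: "density n A \<Longrightarrow> A \<in> carrier_mat n n"
  unfolding density_def using psd_carrier by blast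

lemma density_psd: "density n A \<Longrightarrow> psd n A" unfolding density_def by blast

lemma free_density: "free_set n F \<Longrightarrow> \<sigma> \<in> F \<Longrightarrow> density n \<sigma>"
  unfolding free_set_def by blast

lemma Ptrans_bdd: assumes rho: "density n \<rho>" and rho': "density m \<rho>'"
  shows "bdd_above {p. \<exists>E\<in>free_ops n m F F'. E \<rho> = complex_of_real p \<cdot>\<^sub>m \<rho>'}"
proof (rule bdd_aboveI[of _ 1], clarify)
  fix p E assume E: "E \<in> free_ops n m F F'" and Er: "E \<rho> = complex_of_real p \<cdot>\<^sub>m \<rho>'"
  have "Re (mtrace (E \<rho>)) \<le> Re (mtrace \<rho>)"
    using E density_psd[OF rho] unfolding free_ops_def CPTNI_def by blast
  moreover have "mtrace (E \<rho>) = complex_of_real p"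
    unfolding Er mtrace_smult[OF density_carrier[OF rho']] using rho' by (simp add: density_def)
  ultimately show "p \<le> 1" using rho by (simp add: density_def)
qed

lemma zero_free_op: assumes "F' \<noteq> {}" "free_set m F'"
  shows "(\<lambda>X. 0\<^sub>m m m) \<in> free_ops n m F F'"
proof -
  obtain \<tau> where tau: "\<tau> \<in> F'" using assms by blast
  have tc: "\<tau> \<in> carrier_mat m m" using density_carrier free_density[OF assms(2) tau] by blast
  have "0\<^sub>m m m = complex_of_real 0 \<cdot>\<^sub>m \<tau>" by (rule eq_matI) (use tc in auto)
  then have fr: "\<forall>\<sigma>\<in>F. \<exists>\<sigma>'\<in>F'. \<exists>p::real. 0 \<le> p \<and> p \<le> 1 \<and> (\<lambda>X. 0\<^sub>m m m) \<sigma> = complex_of_real p \<cdot>\<^sub>m \<sigma>'"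
    using tau by (metis order_refl zero_le_one)
  have lin: "lin_map n m (\<lambda>X. 0\<^sub>m m m)" unfolding lin_map_def by (auto intro!: eq_matI)
  have cp: "psd (k*m) (ampl k n m (\<lambda>X. 0\<^sub>m m m) X)" for k X
  proof -
    have "ampl k n m (\<lambda>X. 0\<^sub>m m m) X = 0\<^sub>m (k*m) (k*m)"
    proof (rule eq_matI)
      fix i j assume "i < dim_row (0\<^sub>m (k * m) (k * m) :: complex mat)" "j < dim_col (0\<^sub>m (k * m) (k * m) :: complex mat)"
      then have i: "i < k*m" and j: "j < k*m" by auto
      have m0: "m > 0" using i by (cases m) auto
      then show "ampl k n m (\<lambda>X. 0\<^sub>m m m) X $$ (i, j) = 0\<^sub>m (k * m) (k * m) $$ (i, j)"
        unfolding ampl_def using i j by simp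
    qed (auto simp: ampl_def)
    then show ?thesis using psd_zero by simp
  qed
  have tni: "Re (mtrace (0\<^sub>m m m :: complex mat)) \<le> Re (mtrace X)" if "psd n X" for X
    using psd_trace[OF that] by (simp add: mtrace_formula[of _ m] less_eq_complex_def)
  show ?thesis unfolding free_ops_def CPTNI_def using fr lin cp tni by blast
qed

lemma Ptrans_upper: assumes rho: "density n \<rho>" and rho': "density m \<rho>'"
  and E: "E \<in> free_ops n m F F'" and Er: "E \<rho> = complex_of_real p \<cdot>\<^sub>m \<rho>'"
  shows "p \<le> Ptrans n m F F' \<rho> \<rho>'"
  unfolding Ptrans_def by (rule cSup_upper[OF _ Ptrans_bdd[OF rho rho']]) (use E Er in blast)

lemma psd_of_loewner0: "loewner_le n (0\<^sub>m n n) W \<Longrightarrow> psd n W"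
proof -
  assume a: "loewner_le n (0\<^sub>m n n) W"
  then have Wc: "W \<in> carrier_mat n n" and p: "psd n (W - 0\<^sub>m n n)" unfolding loewner_le_def by auto
  have "W - 0\<^sub>m n n = W" by (rule eq_matI) (use Wc in auto)
  then show ?thesis using p by simp
qed

lemma hs_real: "psd n A \<Longrightarrow> psd n B \<Longrightarrow> hs A B = complex_of_real (Re (hs A B))"
  using hs_psd real_of_nonneg by blast

lemma lower_core:
  assumes fF': "free_set m F'" and tau: "\<tau> \<in> F'" and rho': "density m \<rho>'" and rho: "density n \<rho>"
    and W: "psd n W" and ZW: "psd n (Z - W)" and ZI: "psd n (1\<^sub>m n - Z)"
    and Zc: "Z \<in> carrier_mat n n"
    and eqr: "hs W \<rho> = hs Z \<rho>"
    and free: "\<forall>\<sigma>\<in>F. \<exists>\<sigma>''\<in>F'. \<exists>p::real. 0 \<le> p \<and> p \<le> 1 \<and> mpE W \<rho>' (Z - W) \<tau> \<sigma> = complex_of_real p \<cdot>\<^sub>m \<sigma>''"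
  shows "Re (hs \<rho> W) \<le> Ptrans n m F F' \<rho> \<rho>'"
proof -
  have Wc: "W \<in> carrier_mat n n" using W psd_carrier by blast
  have tden: "density m \<tau>" using free_density[OF fF' tau] .
  have tc: "\<tau> \<in> carrier_mat m m" using density_carrier[OF tden] .
  have rc': "\<rho>' \<in> carrier_mat m m" using density_carrier[OF rho'] .
  have rc: "\<rho> \<in> carrier_mat n n" using density_carrier[OF rho] .
  let ?E = "mpE W \<rho>' (Z - W) \<tau>"
  have lin: "lin_map n m ?E" by (rule mpE_lin[OF Wc _ rc' tc]) (use Zc Wc in \<open>simp add: minus_carrier_mat\<close>)
  have cp: "\<forall>k X. psd (k*n) X \<longrightarrow> psd (k*m) (ampl k n m ?E X)"
    by (rule mpE_cp[OF W ZW density_psd[OF rho'] density_psd[OF tden]])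
  have tni: "\<forall>X. psd n X \<longrightarrow> Re (mtrace (?E X)) \<le> Re (mtrace X)"
    by (rule mpE_tni[OF Wc Zc rc' tc _ _ ZI]) (use rho' tden in \<open>auto simp: density_def\<close>)
  have Ein: "?E \<in> free_ops n m F F'"
    unfolding free_ops_def CPTNI_def using lin cp tni free by blast
  have h0: "hs (Z - W) \<rho> = 0" using hs_minus1[OF Zc Wc rc] eqr by simp
  have hr: "hs W \<rho> = complex_of_real (Re (hs \<rho> W))"
    using hs_real[OF W density_psd[OF rho]] hs_comm[OF Wc rc] by simp
  have "?E \<rho> = complex_of_real (Re (hs \<rho> W)) \<cdot>\<^sub>m \<rho>'"
    by (rule eq_matI) (use rc' tc in \<open>auto simp: mpE_index h0 hr mpE_def\<close>)
  then show ?thesis by (rule Ptrans_upper[OF rho rho' Ein])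
qed

lemma hs_Z_le1: assumes Zc: "Z \<in> carrier_mat n n" and ZI: "psd n (1\<^sub>m n - Z)" and s: "density n \<sigma>"
  shows "Re (hs Z \<sigma>) \<le> 1"
proof -
  have sc: "\<sigma> \<in> carrier_mat n n" using density_carrier[OF s] .
  have "0 \<le> hs (1\<^sub>m n - Z) \<sigma>" by (rule hs_psd[OF ZI density_psd[OF s]])
  also have "hs (1\<^sub>m n - Z) \<sigma> = 1 - hs Z \<sigma>"
    using hs_minus1[OF one_carrier_mat Zc sc] hs_one1[OF sc] s by (simp add: density_def)
  finally show ?thesis by (simp add: less_eq_complex_def)
qed

lemma free_cond:
  assumes fF': "free_set m F'" and tau: "\<tau> \<in> F'" and s0: "\<sigma>0 \<in> F'" and R1: "1 \<le> R"
    and dec: "\<forall>i<m. \<forall>j<m. \<rho>' $$ (i,j) = complex_of_real R * \<sigma>0 $$ (i,j) - complex_of_real (R - 1) * \<tau> $$ (i,j)"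
    and rho': "density m \<rho>'"
    and W: "psd n W" and ZW: "psd n (Z - W)" and ZI: "psd n (1\<^sub>m n - Z)" and Zc: "Z \<in> carrier_mat n n"
    and s: "density n \<sigma>" and bound: "Re (hs W \<sigma>) * R \<le> Re (hs Z \<sigma>)"
  shows "\<exists>\<sigma>''\<in>F'. \<exists>p::real. 0 \<le> p \<and> p \<le> 1 \<and> mpE W \<rho>' (Z - W) \<tau> \<sigma> = complex_of_real p \<cdot>\<^sub>m \<sigma>''"
proof -
  have Wc: "W \<in> carrier_mat n n" using W psd_carrier by blast
  have sc: "\<sigma> \<in> carrier_mat n n" using density_carrier[OF s] .
  have tc: "\<tau> \<in> carrier_mat m m" using density_carrier[OF free_density[OF fF' tau]] .
  have s0c: "\<sigma>0 \<in> carrier_mat m m" using density_carrier[OF free_density[OF fF' s0]] .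
  have rc': "\<rho>' \<in> carrier_mat m m" using density_carrier[OF rho'] .
  define a where "a = Re (hs W \<sigma>)"
  define b where "b = Re (hs (Z - W) \<sigma>)"
  have ha: "hs W \<sigma> = complex_of_real a" unfolding a_def by (rule hs_real[OF W density_psd[OF s]])
  have hb: "hs (Z - W) \<sigma> = complex_of_real b" unfolding b_def by (rule hs_real[OF ZW density_psd[OF s]])
  have a0: "0 \<le> a" unfolding a_def using hs_psd[OF W density_psd[OF s]] by (simp add: less_eq_complex_def)
  have b0: "0 \<le> b" unfolding b_def using hs_psd[OF ZW density_psd[OF s]] by (simp add: less_eq_complex_def)
  have hz: "Re (hs Z \<sigma>) = a + b" unfolding a_def b_def using hs_minus1[OF Zc Wc sc] by simp
  have p1: "a + b \<le> 1" using hs_Z_le1[OF Zc ZI s] hz by simp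
  have aR: "a * R \<le> a + b" using bound hz a_def by simp
  have Eent: "mpE W \<rho>' (Z - W) \<tau> \<sigma> $$ (i,j) = complex_of_real (a * R) * \<sigma>0 $$ (i,j)
      + complex_of_real (a + b - a * R) * \<tau> $$ (i,j)" if "i < m" "j < m" for i j
  proof -
    have eq: "\<rho>' $$ (i,j) = complex_of_real R * \<sigma>0 $$ (i,j) - complex_of_real (R - 1) * \<tau> $$ (i,j)"
      using that dec by blast
    show ?thesis by (simp only: mpE_index[OF rc' tc that] ha hb eq) (simp add: algebra_simps)
  qed
  show ?thesis
  proof (cases "a + b = 0")
    case True
    then have "a = 0" "b = 0" using a0 b0 by auto
    then have "mpE W \<rho>' (Z - W) \<tau> \<sigma> = complex_of_real 0 \<cdot>\<^sub>m \<tau>"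
      by (intro eq_matI) (use tc rc' Eent in \<open>auto simp: mpE_def\<close>)
    then show ?thesis using tau by force
  next
    case False
    define p where "p = a + b"
    have pp: "p > 0" using False a0 b0 p_def by simp
    define t where "t = a * R / p"
    have t0: "0 \<le> t" unfolding t_def using a0 R1 pp by simp
    have t1: "t \<le> 1" unfolding t_def using aR pp p_def by simp
    define s'' where "s'' = complex_of_real t \<cdot>\<^sub>m \<sigma>0 + complex_of_real (1 - t) \<cdot>\<^sub>m \<tau>"
    have s''F: "s'' \<in> F'" using fF' s0 tau t0 t1 unfolding free_set_def mat_convex_def s''_def by blast
    have "mpE W \<rho>' (Z - W) \<tau> \<sigma> = complex_of_real p \<cdot>\<^sub>m s''"
    proof (rule eq_matI)
      fix i j assume "i < dim_row (complex_of_real p \<cdot>\<^sub>m s'')" "j < dim_col (complex_of_real p \<cdot>\<^sub>m s'')"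
      then have i: "i < m" and j: "j < m" using s0c tc by (auto simp: s''_def)
      have pt: "p * t = a * R" unfolding t_def using pp by simp
      have pt2: "p * (1 - t) = a + b - a * R" using pt p_def by (simp add: algebra_simps)
      have "complex_of_real p * complex_of_real t = complex_of_real (a * R)"
        by (metis pt of_real_mult)
      moreover have "complex_of_real p * complex_of_real (1 - t) = complex_of_real (a + b - a * R)"
        by (metis pt2 of_real_mult)
      moreover have "(complex_of_real p \<cdot>\<^sub>m s'') $$ (i, j) = complex_of_real p *
          (complex_of_real t * \<sigma>0 $$ (i,j) + complex_of_real (1 - t) * \<tau> $$ (i,j))"
        using i j s0c tc by (simp add: s''_def)
      moreover have "complex_of_real p *
          (complex_of_real t * \<sigma>0 $$ (i,j) + complex_of_real (1 - t) * \<tau> $$ (i,j))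
         = (complex_of_real p * complex_of_real t) * \<sigma>0 $$ (i,j)
           + (complex_of_real p * complex_of_real (1 - t)) * \<tau> $$ (i,j)"
        by (simp only: distrib_left mult.assoc)
      ultimately show "mpE W \<rho>' (Z - W) \<tau> \<sigma> $$ (i, j) = (complex_of_real p \<cdot>\<^sub>m s'') $$ (i, j)"
        unfolding Eent[OF i j] by simp
    qed (use s0c tc rc' in \<open>auto simp: s''_def mpE_def\<close>)
    then have "\<exists>p'::real. 0 \<le> p' \<and> p' \<le> 1 \<and> mpE W \<rho>' (Z - W) \<tau> \<sigma> = complex_of_real p' \<cdot>\<^sub>m s''"
      using pp p1 p_def by (intro exI[of _ p]) auto
    then show ?thesis using s''F by blast
  qed
qed

lemma free_cond0:
  assumes fF': "free_set m F'" and tau: "\<tau> \<in> F'"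
    and rho': "density m \<rho>'"
    and W: "psd n W" and ZW: "psd n (Z - W)" and ZI: "psd n (1\<^sub>m n - Z)" and Zc: "Z \<in> carrier_mat n n"
    and s: "density n \<sigma>" and bound: "Re (hs W \<sigma>) \<le> 0"
  shows "\<exists>\<sigma>''\<in>F'. \<exists>p::real. 0 \<le> p \<and> p \<le> 1 \<and> mpE W \<rho>' (Z - W) \<tau> \<sigma> = complex_of_real p \<cdot>\<^sub>m \<sigma>''"
proof -
  have Wc: "W \<in> carrier_mat n n" using W psd_carrier by blast
  have sc: "\<sigma> \<in> carrier_mat n n" using density_carrier[OF s] .
  have tc: "\<tau> \<in> carrier_mat m m" using density_carrier[OF free_density[OF fF' tau]] .
  have rc': "\<rho>' \<in> carrier_mat m m" using density_carrier[OF rho'] .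
  define b where "b = Re (hs (Z - W) \<sigma>)"
  have ha: "hs W \<sigma> = 0" using hs_real[OF W density_psd[OF s]] hs_psd[OF W density_psd[OF s]] bound
    by (simp add: less_eq_complex_def complex_eq_iff)
  have hb: "hs (Z - W) \<sigma> = complex_of_real b" unfolding b_def by (rule hs_real[OF ZW density_psd[OF s]])
  have b0: "0 \<le> b" unfolding b_def using hs_psd[OF ZW density_psd[OF s]] by (simp add: less_eq_complex_def)
  have hz: "Re (hs Z \<sigma>) = b" unfolding b_def using hs_minus1[OF Zc Wc sc] ha by simp
  have p1: "b \<le> 1" using hs_Z_le1[OF Zc ZI s] hz by simp
  have "mpE W \<rho>' (Z - W) \<tau> \<sigma> = complex_of_real b \<cdot>\<^sub>m \<tau>"
    by (intro eq_matI) (use tc rc' in \<open>auto simp: mpE_def ha hb\<close>)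
  then show ?thesis using tau b0 p1 by force
qed

lemma density_entry_bound: assumes d: "density m A" and i: "i < m" and j: "j < m"
  shows "cmod (A $$ (i,j)) \<le> 1"
proof -
  obtain N f where Ag: "A = gram m N f" using cholesky[OF density_psd[OF d]] by blast
  have diag: "A $$ (l,l) = complex_of_real (\<Sum>r<N. (cmod (f r l))^2)" if "l < m" for l
    using that unfolding Ag gram_def
    by (simp add: complex_mult_cnj cmod_def power2_eq_square)
  have tr: "(\<Sum>l<m. (\<Sum>r<N. (cmod (f r l))^2)) = 1"
  proof -
    have "1 = Re (mtrace A)" using d by (simp add: density_def)
    also have "\<dots> = (\<Sum>l<m. Re (A $$ (l,l)))" by (simp add: mtrace_formula[OF density_carrier[OF d]])
    also have "\<dots> = (\<Sum>l<m. (\<Sum>r<N. (cmod (f r l))^2))"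
      by (rule sum.cong) (simp_all add: diag del: of_real_sum)
    finally show ?thesis by simp
  qed
  have dl: "(\<Sum>r<N. (cmod (f r l))^2) \<le> 1" if "l < m" for l
  proof -
    have "(\<Sum>r<N. (cmod (f r l))^2) \<le> (\<Sum>l<m. (\<Sum>r<N. (cmod (f r l))^2))"
      by (rule member_le_sum) (use that in \<open>auto intro!: sum_nonneg\<close>)
    then show ?thesis using tr by simp
  qed
  have "cmod (A $$ (i,j)) = cmod (\<Sum>r<N. f r i * cnj (f r j))" unfolding Ag gram_def using i j by simp
  also have "\<dots> \<le> (\<Sum>r<N. cmod (f r i) * cmod (f r j))"
    by (rule order_trans[OF norm_sum]) (simp add: norm_mult)
  also have "\<dots> \<le> (\<Sum>r<N. ((cmod (f r i))^2 + (cmod (f r j))^2) / 2)"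
  proof (rule sum_mono)
    fix r
    have "0 \<le> (cmod (f r i) - cmod (f r j))^2" by simp
    then show "cmod (f r i) * cmod (f r j) \<le> ((cmod (f r i))^2 + (cmod (f r j))^2) / 2"
      by (simp add: power2_eq_square algebra_simps)
  qed
  also have "\<dots> = ((\<Sum>r<N. (cmod (f r i))^2) + (\<Sum>r<N. (cmod (f r j))^2)) / 2"
    by (simp add: sum.distrib sum_divide_distrib[symmetric])
  also have "\<dots> \<le> 1" using dl[OF i] dl[OF j] by simp
  finally show ?thesis .
qed

lemma bounded_real_subseq: fixes y :: "nat \<Rightarrow> real" assumes b: "\<And>k. \<bar>y k\<bar> \<le> (B::real)"
  shows "\<exists>r. strict_mono r \<and> convergent (y \<circ> r)"
proof -
  obtain r where r: "strict_mono r" and mono: "monoseq (\<lambda>n. y (r n))" using seq_monosub[of y] by blast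
  have "Bseq (\<lambda>n. y (r n))" using b by (intro BseqI'[of _ B]) simp
  then have "convergent (\<lambda>n. y (r n))" using Bseq_monoseq_convergent mono by blast
  then show ?thesis using r by (auto simp: o_def)
qed

lemma subseq_multi:
  fixes x :: "nat \<Rightarrow> 'a \<Rightarrow> real"
  assumes "finite I" and "\<And>i k. i \<in> I \<Longrightarrow> \<bar>x k i\<bar> \<le> B"
  shows "\<exists>r L. strict_mono r \<and> (\<forall>i\<in>I. (\<lambda>k. x (r k) i) \<longlonglongrightarrow> L i)"
  using assms
proof (induction I rule: finite_induct)
  case empty
  show ?case by (rule exI[of _ id]) (auto simp: strict_mono_def)
next
  case (insert a I)
  then obtain r L where r: "strict_mono r" and L: "\<forall>i\<in>I. (\<lambda>k. x (r k) i) \<longlonglongrightarrow> L i" by auto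
  have "\<And>k. \<bar>x (r k) a\<bar> \<le> B" using insert by auto
  then obtain r' where r': "strict_mono r'" and c: "convergent ((\<lambda>k. x (r k) a) \<circ> r')"
    using bounded_real_subseq[of "\<lambda>k. x (r k) a" B] by blast
  then obtain la where la: "((\<lambda>k. x (r k) a) \<circ> r') \<longlonglongrightarrow> la" by (auto simp: convergent_def)
  show ?case
  proof (intro exI conjI ballI)
    show "strict_mono (r \<circ> r')" using r r' by (rule strict_mono_o)
    fix i assume "i \<in> insert a I"
    then show "(\<lambda>k. x ((r \<circ> r') k) i) \<longlonglongrightarrow> (L(a := la)) i"
    proof
      assume "i = a" then show ?thesis using la by (simp add: o_def)
    next
      assume iI: "i \<in> I"
      then have ia: "i \<noteq> a" using insert by auto
      have "((\<lambda>k. x (r k) i) \<circ> r') \<longlonglongrightarrow> L i" using LIMSEQ_subseq_LIMSEQ[OF _ r'] L iI by blast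
      then show ?thesis using ia by (simp add: o_def)
    qed
  qed
qed

lemma cone_dec:
  assumes fF': "free_set m F'" and s: "\<sigma> \<in> F'" and rho': "density m \<rho>'"
    and c: "cone_le F' \<rho>' (complex_of_real l \<cdot>\<^sub>m \<sigma>)"
  shows "1 \<le> l \<and> (\<exists>\<tau>\<in>F'. \<forall>i<m. \<forall>j<m.
     \<rho>' $$ (i,j) = complex_of_real l * \<sigma> $$ (i,j) - complex_of_real (l - 1) * \<tau> $$ (i,j))"
proof -
  obtain \<mu> \<tau> where mu: "0 \<le> \<mu>" and tau: "\<tau> \<in> F'"
    and e: "complex_of_real l \<cdot>\<^sub>m \<sigma> - \<rho>' = complex_of_real \<mu> \<cdot>\<^sub>m \<tau>"
    using c unfolding cone_le_def mcone_def by blast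
  have sd: "density m \<sigma>" using free_density[OF fF' s] .
  have td: "density m \<tau>" using free_density[OF fF' tau] .
  have sc: "\<sigma> \<in> carrier_mat m m" and tc: "\<tau> \<in> carrier_mat m m" and rc: "\<rho>' \<in> carrier_mat m m"
    using density_carrier sd td rho' by auto
  have ent: "complex_of_real l * \<sigma> $$ (i,j) - \<rho>' $$ (i,j) = complex_of_real \<mu> * \<tau> $$ (i,j)"
    if "i < m" "j < m" for i j
  proof -
    have "(complex_of_real l \<cdot>\<^sub>m \<sigma> - \<rho>') $$ (i,j) = (complex_of_real \<mu> \<cdot>\<^sub>m \<tau>) $$ (i,j)" using e by simp
    then show ?thesis using that sc tc rc by simp
  qed
  have "complex_of_real l * mtrace \<sigma> - mtrace \<rho>' = complex_of_real \<mu> * mtrace \<tau>"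
    unfolding mtrace_formula[OF sc] mtrace_formula[OF tc] mtrace_formula[OF rc]
    by (simp add: sum_distrib_left sum_subtractf[symmetric] ent)
  then have "complex_of_real (l - 1) = complex_of_real \<mu>" using sd td rho' by (simp add: density_def)
  then have lm: "l - 1 = \<mu>" by (simp only: of_real_eq_iff)
  show ?thesis
  proof (intro conjI bexI[OF _ tau] allI impI)
    show "1 \<le> l" using lm mu by simp
    fix i j assume "i < m" "j < m"
    then show "\<rho>' $$ (i,j) = complex_of_real l * \<sigma> $$ (i,j) - complex_of_real (l - 1) * \<tau> $$ (i,j)"
      using ent[of i j] lm by (simp add: algebra_simps)
  qed
qed

lemma Rmax_ge1: assumes "free_set m F'" "\<sigma> \<in> F'" "density m \<rho>'"
  shows "1 \<le> Rmax F' \<rho>' \<sigma>"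
  unfolding Rmax_def by (rule Inf_greatest) (use cone_dec[OF assms] in auto)

lemma RFF_ge1: assumes "free_set m F'" "density m \<rho>'" shows "1 \<le> RFF F' \<rho>'"
  unfolding RFF_def by (rule Inf_greatest) (use Rmax_ge1 assms in auto)

lemma RFF_attain:
  assumes fF': "free_set m F'" and rho': "density m \<rho>'" and R: "RFF F' \<rho>' = ereal R"
  shows "\<exists>\<sigma>0\<in>F'. \<exists>\<tau>\<in>F'. \<forall>i<m. \<forall>j<m.
     \<rho>' $$ (i,j) = complex_of_real R * \<sigma>0 $$ (i,j) - complex_of_real (R - 1) * \<tau> $$ (i,j)"
proof -
  let ?P = "\<lambda>k (st :: complex mat \<times> complex mat \<times> real). fst st \<in> F' \<and> fst (snd st) \<in> F' \<and>
     R \<le> snd (snd st) \<and> snd (snd st) < R + inverse (real (Suc k)) \<and>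
     (\<forall>i<m. \<forall>j<m. \<rho>' $$ (i,j) = complex_of_real (snd (snd st)) * fst st $$ (i,j)
        - complex_of_real (snd (snd st) - 1) * fst (snd st) $$ (i,j))"
  have ex: "\<exists>st. ?P k st" for k
  proof -
    have "RFF F' \<rho>' < ereal (R + inverse (real (Suc k)))" unfolding R by simp
    then obtain \<sigma> where s: "\<sigma> \<in> F'" and "Rmax F' \<rho>' \<sigma> < ereal (R + inverse (real (Suc k)))"
      unfolding RFF_def by (auto simp: Inf_less_iff)
    then obtain l where l: "cone_le F' \<rho>' (complex_of_real l \<cdot>\<^sub>m \<sigma>)"
      and lt: "ereal l < ereal (R + inverse (real (Suc k)))"
      unfolding Rmax_def by (auto simp: Inf_less_iff)
    have "RFF F' \<rho>' \<le> Rmax F' \<rho>' \<sigma>" unfolding RFF_def by (rule Inf_lower) (use s in blast)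
    also have "Rmax F' \<rho>' \<sigma> \<le> ereal l" unfolding Rmax_def by (rule Inf_lower) (use l in blast)
    finally have Rl: "R \<le> l" unfolding R by simp
    obtain \<tau> where tau: "\<tau> \<in> F'" and dec: "\<forall>i<m. \<forall>j<m.
        \<rho>' $$ (i,j) = complex_of_real l * \<sigma> $$ (i,j) - complex_of_real (l - 1) * \<tau> $$ (i,j)"
      using cone_dec[OF fF' s rho' l] by blast
    show ?thesis by (rule exI[of _ "(\<sigma>, \<tau>, l)"]) (use s tau Rl lt dec in simp)
  qed
  then obtain st where st: "\<And>k. ?P k (st k)" by metis
  define S where "S = (\<lambda>k. fst (st k))"
  define T where "T = (\<lambda>k. fst (snd (st k)))"
  define Lk where "Lk = (\<lambda>k. snd (snd (st k)))"
  have SF: "S k \<in> F'" and TF: "T k \<in> F'" and LR: "R \<le> Lk k" and Lu: "Lk k < R + inverse (real (Suc k))"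
    and dec: "\<forall>i<m. \<forall>j<m. \<rho>' $$ (i,j) = complex_of_real (Lk k) * S k $$ (i,j)
        - complex_of_real (Lk k - 1) * T k $$ (i,j)" for k
    using st[of k] unfolding S_def T_def Lk_def by auto
  define x where "x = (\<lambda>k (idx :: nat \<times> nat \<times> bool \<times> bool). case idx of (i,j,w,c) \<Rightarrow>
      (if c then Re else Im) ((if w then S k else T k) $$ (i,j)))"
  let ?I = "{..<m} \<times> {..<m} \<times> (UNIV :: bool set) \<times> (UNIV :: bool set)"
  have bnd: "\<bar>x k idx\<bar> \<le> 1" if "idx \<in> ?I" for idx k
  proof -
    obtain i j w c where idx: "idx = (i,j,w,c)" using prod_cases4 by blast
    have i: "i < m" and j: "j < m" using that idx by auto
    have "cmod ((if w then S k else T k) $$ (i,j)) \<le> 1"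
      using density_entry_bound[OF free_density[OF fF'] i j] SF TF by auto
    then show ?thesis unfolding x_def idx
      using abs_Re_le_cmod abs_Im_le_cmod by (auto intro: order_trans[OF abs_Re_le_cmod] order_trans[OF abs_Im_le_cmod])
  qed
  obtain r L where r: "strict_mono r" and conv: "\<forall>idx\<in>?I. (\<lambda>k. x (r k) idx) \<longlonglongrightarrow> L idx"
    using subseq_multi[of ?I x 1] bnd by auto
  define \<sigma>0 where "\<sigma>0 = mat m m (\<lambda>(i,j). Complex (L (i,j,True,True)) (L (i,j,True,False)))"
  define \<tau>0 where "\<tau>0 = mat m m (\<lambda>(i,j). Complex (L (i,j,False,True)) (L (i,j,False,False)))"
  have cS: "(\<lambda>k. S (r k) $$ (i,j)) \<longlonglongrightarrow> \<sigma>0 $$ (i,j)" if "i < m" "j < m" for i j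
  proof -
    have "(\<lambda>k. Complex (x (r k) (i,j,True,True)) (x (r k) (i,j,True,False)))
        \<longlonglongrightarrow> Complex (L (i,j,True,True)) (L (i,j,True,False))"
      by (intro tendsto_Complex) (use conv that in auto)
    then show ?thesis using that unfolding \<sigma>0_def x_def by (simp add: complex.collapse)
  qed
  have cT: "(\<lambda>k. T (r k) $$ (i,j)) \<longlonglongrightarrow> \<tau>0 $$ (i,j)" if "i < m" "j < m" for i j
  proof -
    have "(\<lambda>k. Complex (x (r k) (i,j,False,True)) (x (r k) (i,j,False,False)))
        \<longlonglongrightarrow> Complex (L (i,j,False,True)) (L (i,j,False,False))"
      by (intro tendsto_Complex) (use conv that in auto)
    then show ?thesis using that unfolding \<tau>0_def x_def by (simp add: complex.collapse)
  qed
  have cl: "mat_closed m F'" using fF' unfolding free_set_def by blast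
  have s0F: "\<sigma>0 \<in> F'"
    using cl unfolding mat_closed_def
    by (elim allE[of _ "\<lambda>k. S (r k)"] allE[of _ \<sigma>0]) (use SF cS in \<open>auto simp: \<sigma>0_def\<close>)
  have t0F: "\<tau>0 \<in> F'"
    using cl unfolding mat_closed_def
    by (elim allE[of _ "\<lambda>k. T (r k)"] allE[of _ \<tau>0]) (use TF cT in \<open>auto simp: \<tau>0_def\<close>)
  have LkR: "Lk \<longlonglongrightarrow> R"
  proof (rule tendsto_sandwich[of "\<lambda>_. R" _ _ "\<lambda>k. R + inverse (real (Suc k))"])
    show "\<forall>\<^sub>F k in sequentially. R \<le> Lk k" using LR by simp
    show "\<forall>\<^sub>F k in sequentially. Lk k \<le> R + inverse (real (Suc k))"
      by (rule always_eventually) (use Lu less_imp_le in blast)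
    show "(\<lambda>k. R) \<longlonglongrightarrow> R" by simp
    show "(\<lambda>k. R + inverse (real (Suc k))) \<longlonglongrightarrow> R"
      using tendsto_add[OF tendsto_const LIMSEQ_inverse_real_of_nat, of R] by simp
  qed
  have LkR': "(\<lambda>k. Lk (r k)) \<longlonglongrightarrow> R" using LIMSEQ_subseq_LIMSEQ[OF LkR r] by (simp add: o_def)
  show ?thesis
  proof (rule bexI[OF _ s0F], rule bexI[OF _ t0F], intro allI impI)
    fix i j assume i: "i < m" and j: "j < m"
    have "(\<lambda>k. complex_of_real (Lk (r k)) * S (r k) $$ (i,j) - complex_of_real (Lk (r k) - 1) * T (r k) $$ (i,j))
        \<longlonglongrightarrow> complex_of_real R * \<sigma>0 $$ (i,j) - complex_of_real (R - 1) * \<tau>0 $$ (i,j)"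
      by (intro tendsto_intros LkR' cS[OF i j] cT[OF i j])
    moreover have "(\<lambda>k. complex_of_real (Lk (r k)) * S (r k) $$ (i,j) - complex_of_real (Lk (r k) - 1) * T (r k) $$ (i,j))
        = (\<lambda>k. \<rho>' $$ (i,j))" using dec i j by auto
    ultimately show "\<rho>' $$ (i,j) = complex_of_real R * \<sigma>0 $$ (i,j) - complex_of_real (R - 1) * \<tau>0 $$ (i,j)"
      using LIMSEQ_unique tendsto_const by metis
  qed
qed

definition Eij :: "nat \<Rightarrow> nat \<Rightarrow> nat \<Rightarrow> complex mat" where
  "Eij n i j = mat n n (\<lambda>(a,b). if a = i \<and> b = j then 1 else 0)"

definition msum :: "nat \<Rightarrow> (nat \<times> nat) set \<Rightarrow> (nat \<times> nat \<Rightarrow> complex) \<Rightarrow> complex mat" where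
  "msum n S c = mat n n (\<lambda>(a,b). \<Sum>x\<in>S. c x * Eij n (fst x) (snd x) $$ (a,b))"

definition adjE :: "nat \<Rightarrow> (complex mat \<Rightarrow> complex mat) \<Rightarrow> complex mat \<Rightarrow> complex mat" where
  "adjE n E Y = mat n n (\<lambda>(j,i). hs Y (E (Eij n i j)))"

lemma Eij_carrier[simp]: "Eij n i j \<in> carrier_mat n n" by (simp add: Eij_def)
lemma Eij_dim[simp]: "dim_row (Eij n i j) = n" "dim_col (Eij n i j) = n" by (simp_all add: Eij_def)
lemma msum_carrier[simp]: "msum n S c \<in> carrier_mat n n" by (simp add: msum_def)
lemma adjE_carrier[simp]: "adjE n E Y \<in> carrier_mat n n" by (simp add: adjE_def)

lemma lin_zero: assumes "lin_map n m E" shows "E (0\<^sub>m n n) = 0\<^sub>m m m"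
proof -
  have c: "E (0\<^sub>m n n) \<in> carrier_mat m m" using assms unfolding lin_map_def by simp
  have "0\<^sub>m n n = (0::complex) \<cdot>\<^sub>m 0\<^sub>m n n" by (rule eq_matI) auto
  then have "E (0\<^sub>m n n) = 0 \<cdot>\<^sub>m E (0\<^sub>m n n)" using assms unfolding lin_map_def by (metis zero_carrier_mat)
  also have "\<dots> = 0\<^sub>m m m" by (rule eq_matI) (use c in auto)
  finally show ?thesis .
qed

lemma lin_msum: assumes lin: "lin_map n m E" and fin: "finite S"
  shows "a < m \<Longrightarrow> b < m \<Longrightarrow> E (msum n S c) $$ (a,b) = (\<Sum>x\<in>S. c x * E (Eij n (fst x) (snd x)) $$ (a,b))"
  using fin
proof (induction S rule: finite_induct)
  case empty
  have "msum n {} c = 0\<^sub>m n n" by (rule eq_matI) (auto simp: msum_def)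
  then show ?case using lin_zero[OF lin] empty by simp
next
  case (insert x S)
  have car: "\<And>X. X \<in> carrier_mat n n \<Longrightarrow> E X \<in> carrier_mat m m" using lin unfolding lin_map_def by blast
  have "msum n (insert x S) c = c x \<cdot>\<^sub>m Eij n (fst x) (snd x) + msum n S c"
    by (rule eq_matI) (use insert in \<open>auto simp: msum_def\<close>)
  then have "E (msum n (insert x S) c) = c x \<cdot>\<^sub>m E (Eij n (fst x) (snd x)) + E (msum n S c)"
    using lin unfolding lin_map_def by (metis Eij_carrier msum_carrier smult_carrier_mat)
  then show ?case using insert car[OF Eij_carrier, of "fst x" "snd x"] car[OF msum_carrier, of S c] by simp
qed

lemma mat_as_msum: assumes X: "X \<in> carrier_mat n n"
  shows "X = msum n ({..<n} \<times> {..<n}) (\<lambda>x. X $$ x)"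
proof (rule eq_matI)
  fix a b assume "a < dim_row (msum n ({..<n} \<times> {..<n}) (\<lambda>x. X $$ x))" "b < dim_col (msum n ({..<n} \<times> {..<n}) (\<lambda>x. X $$ x))"
  then have a: "a < n" and b: "b < n" by (auto simp: msum_def)
  have "(\<Sum>x\<in>{..<n} \<times> {..<n}. X $$ x * Eij n (fst x) (snd x) $$ (a,b))
      = (\<Sum>x\<in>{..<n} \<times> {..<n}. if x = (a,b) then X $$ x else 0)"
    by (rule sum.cong) (use a b in \<open>auto simp: Eij_def\<close>)
  also have "\<dots> = X $$ (a,b)" using a b by simp
  finally show "X $$ (a,b) = msum n ({..<n} \<times> {..<n}) (\<lambda>x. X $$ x) $$ (a,b)"
    using a b by (simp add: msum_def)
qed (use X in \<open>auto simp: msum_def\<close>)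

lemma adjE_hs: assumes lin: "lin_map n m E" and X: "X \<in> carrier_mat n n" and Y: "Y \<in> carrier_mat m m"
  shows "hs (adjE n E Y) X = hs Y (E X)"
proof -
  have car: "\<And>X. X \<in> carrier_mat n n \<Longrightarrow> E X \<in> carrier_mat m m" using lin unfolding lin_map_def by blast
  have EX: "E X $$ (b,a) = (\<Sum>x\<in>{..<n} \<times> {..<n}. X $$ x * E (Eij n (fst x) (snd x)) $$ (b,a))"
    if "a < m" "b < m" for a b
    using lin_msum[OF lin _ that(2,1), of "{..<n} \<times> {..<n}" "\<lambda>x. X $$ x"] mat_as_msum[OF X] by simp
  have "hs Y (E X) = (\<Sum>a<m. \<Sum>b<m. Y $$ (a,b) * E X $$ (b,a))"
    by (rule hs_formula[OF Y car[OF X]])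
  also have "\<dots> = (\<Sum>a<m. \<Sum>b<m. \<Sum>x\<in>{..<n} \<times> {..<n}. X $$ x * (Y $$ (a,b) * E (Eij n (fst x) (snd x)) $$ (b,a)))"
    by (intro sum.cong refl) (simp add: EX sum_distrib_left mult_ac)
  also have "\<dots> = (\<Sum>x\<in>{..<n} \<times> {..<n}. X $$ x * hs Y (E (Eij n (fst x) (snd x))))"
    by (simp add: hs_formula[OF Y car[OF Eij_carrier]] sum_distrib_left sum.swap[of _ "{..<n} \<times> {..<n}"])
  also have "\<dots> = (\<Sum>i<n. \<Sum>j<n. X $$ (i,j) * hs Y (E (Eij n i j)))"
    by (simp add: sum.cartesian_product case_prod_beta)
  also have "\<dots> = (\<Sum>j<n. \<Sum>i<n. adjE n E Y $$ (j,i) * X $$ (i,j))"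
    by (subst sum.swap) (auto simp: adjE_def mult.commute intro!: sum.cong)
  also have "\<dots> = hs (adjE n E Y) X" by (rule hs_formula[symmetric, OF adjE_carrier X])
  finally show ?thesis by simp
qed

lemma adjE_minus: assumes lin: "lin_map n m E" and Y1: "Y1 \<in> carrier_mat m m" and Y2: "Y2 \<in> carrier_mat m m"
  shows "adjE n E (Y1 - Y2) = adjE n E Y1 - adjE n E Y2"
proof -
  have car: "\<And>X. X \<in> carrier_mat n n \<Longrightarrow> E X \<in> carrier_mat m m" using lin unfolding lin_map_def by blast
  show ?thesis
    by (rule eq_matI) (auto simp: adjE_def hs_minus1[OF Y1 Y2 car[OF Eij_carrier]])
qed

lemma qf_as_hs: assumes A: "A \<in> carrier_mat n n" shows "qf n A v = hs A (gram n 1 (\<lambda>_. v))"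
  unfolding qf_def bf_def hs_formula[OF A gram_carrier]
  by (intro sum.cong refl) (simp add: gram_def mult_ac)

lemma ampl1: assumes c: "E X \<in> carrier_mat m m" and X: "X \<in> carrier_mat n n"
  shows "ampl 1 n m E X = E X"
proof -
  have "blk n X 0 0 = X" by (rule eq_matI) (use X in \<open>auto simp: blk_def\<close>)
  then show ?thesis by (intro eq_matI) (use c in \<open>auto simp: ampl_def\<close>)
qed

lemma CPTNI_pos: assumes E: "CPTNI n m E" and X: "psd n X" shows "psd m (E X)"
proof -
  have Xc: "X \<in> carrier_mat n n" using psd_carrier[OF X] .
  have c: "E X \<in> carrier_mat m m" using E Xc unfolding CPTNI_def lin_map_def by blast
  have cp: "\<forall>k X. psd (k*n) X \<longrightarrow> psd (k*m) (ampl k n m E X)" using E unfolding CPTNI_def by blast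
  have "psd (1*n) X" using X by simp
  then have "psd (1*m) (ampl 1 n m E X)" using cp by blast
  then show ?thesis using ampl1[of E X m n, OF c Xc] by simp
qed

lemma loewner_parts: assumes "Hfeas n S \<rho> t W Z"
  shows "psd n W" "psd n (Z - W)" "psd n (1\<^sub>m n - Z)" "Z \<in> carrier_mat n n" "W \<in> carrier_mat n n"
    "hs W \<rho> = hs Z \<rho>" "\<forall>\<sigma>\<in>S. ereal (Re (hs W \<sigma>)) \<le> einv t * ereal (Re (hs Z \<sigma>))"
  using assms psd_of_loewner0 unfolding Hfeas_def loewner_le_def by auto

lemma Hval_bdd: assumes rho: "density n \<rho>"
  shows "bdd_above {Re (hs \<rho> W) | W Z. Hfeas n S \<rho> t W Z}"
proof (rule bdd_aboveI[of _ 1], clarify)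
  fix W Z assume h: "Hfeas n S \<rho> t W Z"
  have rc: "\<rho> \<in> carrier_mat n n" using density_carrier[OF rho] .
  have "hs \<rho> W = hs Z \<rho>" using hs_comm[OF rc loewner_parts(5)[OF h]] loewner_parts(6)[OF h] by simp
  then show "Re (hs \<rho> W) \<le> 1" using hs_Z_le1[OF loewner_parts(4)[OF h] loewner_parts(3)[OF h] rho] by simp
qed

lemma Hval_upper: assumes rho: "density n \<rho>" and h: "Hfeas n S \<rho> t W Z"
  shows "Re (hs \<rho> W) \<le> Hval n S \<rho> t"
  unfolding Hval_def by (rule cSup_upper[OF _ Hval_bdd[OF rho]]) (use h in blast)

lemma Hfeas_zero: assumes Sc: "\<forall>\<sigma>\<in>S. \<sigma> \<in> carrier_mat n n"
  shows "Hfeas n S \<rho> t (0\<^sub>m n n) (0\<^sub>m n n)"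
proof -
  have p0: "psd n (0\<^sub>m n n - 0\<^sub>m n n)"
  proof -
    have e: "0\<^sub>m n n - 0\<^sub>m n n = (0\<^sub>m n n :: complex mat)" by (rule eq_matI) auto
    show ?thesis unfolding e by (rule psd_zero)
  qed
  have p1: "psd n (1\<^sub>m n - 0\<^sub>m n n)"
  proof -
    have e: "1\<^sub>m n - 0\<^sub>m n n = (1\<^sub>m n :: complex mat)" by (rule eq_matI) auto
    have a: "adj (1\<^sub>m n) = (1\<^sub>m n :: complex mat)" by (rule eq_matI) (auto simp: adj_def)
    have "psd n (1\<^sub>m n)" by (rule idem_herm_psd[OF one_carrier_mat _ a]) simp
    then show ?thesis unfolding e .
  qed
  show ?thesis unfolding Hfeas_def loewner_le_def
    using p0 p1 Sc by (auto simp: hs_zero1 zero_ereal_def[symmetric])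
qed

lemma Hval_nonempty: "\<forall>\<sigma>\<in>S. \<sigma> \<in> carrier_mat n n \<Longrightarrow> {Re (hs \<rho> W) | W Z. Hfeas n S \<rho> t W Z} \<noteq> {}"
  using Hfeas_zero by blast

lemma einv_einv: assumes "0 \<le> V" shows "einv (einv (ereal V)) = (if V = 0 then 0 else ereal V)"
  using assms unfolding einv_def by (auto simp: zero_ereal_def)

lemma VF_facts: assumes fF': "free_set m F'" and ne: "F' \<noteq> {}" and rho': "density m \<rho>'"
  and s: "\<sigma> \<in> F'"
  shows "0 \<le> Re (hs (supp_proj m \<rho>') \<sigma>)" "Re (hs (supp_proj m \<rho>') \<sigma>) \<le> VF m F' \<rho>'"
    "0 \<le> VF m F' \<rho>'"
proof -
  let ?P = "supp_proj m \<rho>'"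
  have rc: "\<rho>' \<in> carrier_mat m m" using density_carrier[OF rho'] .
  have pr: "is_supp_proj m \<rho>' ?P" by (rule supp_proj_is[OF rc])
  have Pc: "?P \<in> carrier_mat m m" using pr unfolding is_supp_proj_def by blast
  have bdd: "bdd_above ((\<lambda>\<sigma>. Re (hs ?P \<sigma>)) ` F')"
    by (rule bdd_aboveI[of _ 1]) (use hs_Z_le1[OF Pc proj_compl_psd[OF pr]] free_density[OF fF'] in auto)
  show nn: "0 \<le> Re (hs ?P \<sigma>)"
    using hs_psd[OF proj_psd[OF pr] density_psd[OF free_density[OF fF' s]]] by (simp add: less_eq_complex_def)
  show le: "Re (hs ?P \<sigma>) \<le> VF m F' \<rho>'" unfolding VF_def by (rule cSup_upper[OF _ bdd]) (use s in blast)
  show "0 \<le> VF m F' \<rho>'" using nn le by linarith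
qed

lemma upper_core:
  assumes fF: "free_set n F" and fF': "free_set m F'" and ne: "F' \<noteq> {}"
    and rho: "density n \<rho>" and rho': "density m \<rho>'"
    and E: "E \<in> free_ops n m F F'" and Er: "E \<rho> = complex_of_real p \<cdot>\<^sub>m \<rho>'"
  shows "p \<le> Hval n F \<rho> (einv (ereal (VF m F' \<rho>')))"
proof -
  define P where "P = supp_proj m \<rho>'"
  have rc': "\<rho>' \<in> carrier_mat m m" using density_carrier[OF rho'] .
  have rc: "\<rho> \<in> carrier_mat n n" using density_carrier[OF rho] .
  have pr: "is_supp_proj m \<rho>' P" unfolding P_def by (rule supp_proj_is[OF rc'])
  have Pc: "P \<in> carrier_mat m m" using pr unfolding is_supp_proj_def by blast
  have Pp: "psd m P" by (rule proj_psd[OF pr])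
  have Qp: "psd m (1\<^sub>m m - P)" by (rule proj_compl_psd[OF pr])
  have PR: "P * \<rho>' = \<rho>'" by (rule proj_fix[OF pr rc'])
  have cptni: "CPTNI n m E" and fr: "\<forall>\<sigma>\<in>F. \<exists>\<sigma>'\<in>F'. \<exists>p::real. 0 \<le> p \<and> p \<le> 1 \<and> E \<sigma> = complex_of_real p \<cdot>\<^sub>m \<sigma>'"
    using E unfolding free_ops_def by auto
  have lin: "lin_map n m E" and tni: "\<forall>X. psd n X \<longrightarrow> Re (mtrace (E X)) \<le> Re (mtrace X)"
    using cptni unfolding CPTNI_def by auto
  have car: "\<And>X. X \<in> carrier_mat n n \<Longrightarrow> E X \<in> carrier_mat m m" using lin unfolding lin_map_def by blast
  define W where "W = adjE n E P"
  define Z where "Z = adjE n E (1\<^sub>m m)"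
  have Wc: "W \<in> carrier_mat n n" and Zc: "Z \<in> carrier_mat n n" unfolding W_def Z_def by auto
  have ZW: "Z - W = adjE n E (1\<^sub>m m - P)" unfolding W_def Z_def
    by (rule adjE_minus[symmetric, OF lin one_carrier_mat Pc])
  have qfE: "qf n (adjE n E Y) v = hs Y (E (gram n 1 (\<lambda>_. v)))" if "Y \<in> carrier_mat m m" for Y v
    using qf_as_hs[OF adjE_carrier] adjE_hs[OF lin gram_carrier that] by simp
  have EGp: "psd m (E (gram n 1 (\<lambda>_. v)))" for v by (rule CPTNI_pos[OF cptni gram_psd])
  have Wp: "psd n W" unfolding psd_qf W_def using qfE[OF Pc] hs_psd[OF Pp EGp] by simp
  have ZWp: "psd n (Z - W)" unfolding psd_qf ZW
    using qfE[OF minus_carrier_mat[OF Pc]] hs_psd[OF Qp EGp] by simp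
  have IZp: "psd n (1\<^sub>m n - Z)" unfolding psd_qf
  proof (intro conjI allI)
    show "1\<^sub>m n - Z \<in> carrier_mat n n" using Zc by (simp add: minus_carrier_mat)
    fix v
    let ?G = "gram n 1 (\<lambda>_. v)"
    have "qf n (1\<^sub>m n - Z) v = qf n (1\<^sub>m n) v - qf n Z v"
      unfolding qf_def by (rule bf_minus_mat[OF one_carrier_mat Zc])
    also have "\<dots> = mtrace ?G - mtrace (E ?G)"
      unfolding Z_def qfE[OF one_carrier_mat] qf_as_hs[OF one_carrier_mat]
      by (simp add: hs_one1 car)
    finally have e: "qf n (1\<^sub>m n - Z) v = mtrace ?G - mtrace (E ?G)" .
    have "Re (mtrace (E ?G)) \<le> Re (mtrace ?G)" using tni gram_psd by blast
    moreover have "Im (mtrace (E ?G)) = 0" using psd_trace[OF EGp] by (simp add: less_eq_complex_def)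
    moreover have "Im (mtrace ?G) = 0" using psd_trace[OF gram_psd] by (simp add: less_eq_complex_def)
    ultimately show "0 \<le> qf n (1\<^sub>m n - Z) v" unfolding e by (simp add: less_eq_complex_def)
  qed
  have trr: "mtrace \<rho>' = 1" using rho' by (simp add: density_def)
  have hsW: "hs W \<rho> = complex_of_real p"
  proof -
    have "hs W \<rho> = hs P (E \<rho>)" unfolding W_def by (rule adjE_hs[OF lin rc Pc])
    also have "\<dots> = complex_of_real p * hs P \<rho>'" unfolding Er by (rule hs_smult2[OF rc' Pc])
    also have "hs P \<rho>' = 1" unfolding hs_def PR trr ..
    finally show ?thesis by simp
  qed
  have hsZ: "hs Z \<rho> = complex_of_real p"
  proof -
    have "hs Z \<rho> = hs (1\<^sub>m m) (E \<rho>)" unfolding Z_def by (rule adjE_hs[OF lin rc one_carrier_mat])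
    also have "\<dots> = mtrace (E \<rho>)" by (rule hs_one1[OF car[OF rc]])
    also have "\<dots> = complex_of_real p" unfolding Er mtrace_smult[OF rc'] trr by simp
    finally show ?thesis .
  qed
  have V0: "0 \<le> VF m F' \<rho>'" using VF_facts(3)[OF fF' ne rho'] ne by blast
  have cons: "\<forall>\<sigma>\<in>F. ereal (Re (hs W \<sigma>)) \<le> einv (einv (ereal (VF m F' \<rho>'))) * ereal (Re (hs Z \<sigma>))"
  proof
    fix \<sigma> assume s: "\<sigma> \<in> F"
    have sc: "\<sigma> \<in> carrier_mat n n" using density_carrier[OF free_density[OF fF s]] .
    obtain \<sigma>'' q where s'': "\<sigma>'' \<in> F'" and q0: "0 \<le> q" and q1: "q \<le> 1"
      and Es: "E \<sigma> = complex_of_real q \<cdot>\<^sub>m \<sigma>''" using fr s by blast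
    have s''c: "\<sigma>'' \<in> carrier_mat m m" using density_carrier[OF free_density[OF fF' s'']] .
    have trs: "mtrace \<sigma>'' = 1" using free_density[OF fF' s''] by (simp add: density_def)
    have a: "Re (hs W \<sigma>) = q * Re (hs P \<sigma>'')"
      unfolding W_def adjE_hs[OF lin sc Pc] Es hs_smult2[OF s''c Pc] by simp
    have b: "Re (hs Z \<sigma>) = q"
      unfolding Z_def adjE_hs[OF lin sc one_carrier_mat] Es hs_smult2[OF s''c one_carrier_mat]
        hs_one1[OF s''c] trs by simp
    have x0: "0 \<le> Re (hs P \<sigma>'')" and xV: "Re (hs P \<sigma>'') \<le> VF m F' \<rho>'"
      using VF_facts[OF fF' ne rho' s''] unfolding P_def by auto
    show "ereal (Re (hs W \<sigma>)) \<le> einv (einv (ereal (VF m F' \<rho>'))) * ereal (Re (hs Z \<sigma>))"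
    proof (cases "VF m F' \<rho>' = 0")
      case True
      then have "Re (hs W \<sigma>) \<le> 0" unfolding a using xV q0 by (simp add: mult_nonneg_nonpos)
      then show ?thesis unfolding einv_einv[OF V0] using True by (simp add: zero_ereal_def[symmetric])
    next
      case False
      have "q * Re (hs P \<sigma>'') \<le> VF m F' \<rho>' * q" using xV q0 by (simp add: mult.commute mult_left_mono)
      then show ?thesis unfolding einv_einv[OF V0] a b using False by simp
    qed
  qed
  have feas: "Hfeas n F \<rho> (einv (ereal (VF m F' \<rho>'))) W Z"
    unfolding Hfeas_def loewner_le_def
  proof (intro conjI)
    have e: "W - 0\<^sub>m n n = W" by (rule eq_matI) (use Wc in auto)
    show "psd n (W - 0\<^sub>m n n)" unfolding e by (rule Wp)
  qed (use Wc Zc ZWp IZp hsW hsZ cons in auto)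
  have "Re (hs \<rho> W) = p" using hs_comm[OF rc Wc] hsW by simp
  then show ?thesis using Hval_upper[OF rho feas] by simp
qed

lemma lower_feas:
  assumes fF: "free_set n F" and fF': "free_set m F'" and ne: "F' \<noteq> {}"
    and rho: "density n \<rho>" and rho': "density m \<rho>'"
    and h: "Hfeas n F \<rho> (RFF F' \<rho>') W Z"
  shows "Re (hs \<rho> W) \<le> Ptrans n m F F' \<rho> \<rho>'"
proof -
  have W: "psd n W" and ZW: "psd n (Z - W)" and ZI: "psd n (1\<^sub>m n - Z)" and Zc: "Z \<in> carrier_mat n n"
    and eqr: "hs W \<rho> = hs Z \<rho>"
    and cons: "\<forall>\<sigma>\<in>F. ereal (Re (hs W \<sigma>)) \<le> einv (RFF F' \<rho>') * ereal (Re (hs Z \<sigma>))"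
    using loewner_parts[OF h] by auto
  have R1: "1 \<le> RFF F' \<rho>'" by (rule RFF_ge1[OF fF' rho'])
  obtain \<tau> where tau: "\<tau> \<in> F'" using ne by blast
  show ?thesis
  proof (cases "RFF F' \<rho>'")
    case (real R)
    have R1': "1 \<le> R" using R1 real by simp
    obtain \<sigma>0 \<tau>0 where s0: "\<sigma>0 \<in> F'" and t0: "\<tau>0 \<in> F'" and dec: "\<forall>i<m. \<forall>j<m.
       \<rho>' $$ (i,j) = complex_of_real R * \<sigma>0 $$ (i,j) - complex_of_real (R - 1) * \<tau>0 $$ (i,j)"
      using RFF_attain[OF fF' rho' real] by blast
    have ei: "einv (RFF F' \<rho>') = ereal (1 / R)" using real R1' unfolding einv_def by (auto simp: zero_ereal_def)
    have free: "\<forall>\<sigma>\<in>F. \<exists>\<sigma>''\<in>F'. \<exists>p::real. 0 \<le> p \<and> p \<le> 1 \<and> mpE W \<rho>' (Z - W) \<tau>0 \<sigma> = complex_of_real p \<cdot>\<^sub>m \<sigma>''"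
    proof
      fix \<sigma> assume s: "\<sigma> \<in> F"
      have "ereal (Re (hs W \<sigma>)) \<le> ereal (1 / R) * ereal (Re (hs Z \<sigma>))" using cons s ei by simp
      then have "Re (hs W \<sigma>) \<le> 1 / R * Re (hs Z \<sigma>)" by simp
      then have b: "Re (hs W \<sigma>) * R \<le> Re (hs Z \<sigma>)" using R1' by (simp add: field_simps)
      show "\<exists>\<sigma>''\<in>F'. \<exists>p::real. 0 \<le> p \<and> p \<le> 1 \<and> mpE W \<rho>' (Z - W) \<tau>0 \<sigma> = complex_of_real p \<cdot>\<^sub>m \<sigma>''"
        by (rule free_cond[OF fF' t0 s0 R1' dec rho' W ZW ZI Zc free_density[OF fF s] b])
    qed
    show ?thesis by (rule lower_core[OF fF' t0 rho' rho W ZW ZI Zc eqr free])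
  next
    case PInf
    have ei: "einv (RFF F' \<rho>') = 0" using PInf unfolding einv_def by simp
    have free: "\<forall>\<sigma>\<in>F. \<exists>\<sigma>''\<in>F'. \<exists>p::real. 0 \<le> p \<and> p \<le> 1 \<and> mpE W \<rho>' (Z - W) \<tau> \<sigma> = complex_of_real p \<cdot>\<^sub>m \<sigma>''"
    proof
      fix \<sigma> assume s: "\<sigma> \<in> F"
      have "ereal (Re (hs W \<sigma>)) \<le> 0 * ereal (Re (hs Z \<sigma>))" using cons s ei by simp
      then have b: "Re (hs W \<sigma>) \<le> 0" by (simp add: zero_ereal_def)
      show "\<exists>\<sigma>''\<in>F'. \<exists>p::real. 0 \<le> p \<and> p \<le> 1 \<and> mpE W \<rho>' (Z - W) \<tau> \<sigma> = complex_of_real p \<cdot>\<^sub>m \<sigma>''"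
        by (rule free_cond0[OF fF' tau rho' W ZW ZI Zc free_density[OF fF s] b])
    qed
    show ?thesis by (rule lower_core[OF fF' tau rho' rho W ZW ZI Zc eqr free])
  next
    case MInf
    then show ?thesis using R1 by simp
  qed
qed

theorem theorem7:
  fixes n m :: nat and F F' :: "complex mat set" and \<rho> \<rho>' :: "complex mat"
  assumes "free_set n F" and "free_set m F'" and "F' \<noteq> {}"
    and "density n \<rho>" and "density m \<rho>'"
  shows "Hval n F \<rho> (einv (ereal (VF m F' \<rho>'))) \<ge> Ptrans n m F F' \<rho> \<rho>'
       \<and> Ptrans n m F F' \<rho> \<rho>' \<ge> Hval n F \<rho> (RFF F' \<rho>')"
proof
  have Fc: "\<forall>\<sigma>\<in>F. \<sigma> \<in> carrier_mat n n"
  proof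
    fix \<sigma> assume "\<sigma> \<in> F"
    then show "\<sigma> \<in> carrier_mat n n" by (rule density_carrier[OF free_density[OF assms(1)]])
  qed
  show "Hval n F \<rho> (einv (ereal (VF m F' \<rho>'))) \<ge> Ptrans n m F F' \<rho> \<rho>'"
    unfolding Ptrans_def
  proof (rule cSup_least)
    have Ein: "(\<lambda>X. 0\<^sub>m m m) \<in> free_ops n m F F'" by (rule zero_free_op[OF assms(3,2)])
    have eq: "0\<^sub>m m m = complex_of_real 0 \<cdot>\<^sub>m \<rho>'"
      by (rule eq_matI) (use density_carrier[OF assms(5)] in auto)
    have "\<exists>E\<in>free_ops n m F F'. E \<rho> = complex_of_real 0 \<cdot>\<^sub>m \<rho>'"
      by (rule bexI[where x="\<lambda>X. 0\<^sub>m m m"]) (use eq Ein in simp_all)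
    then have "(0::real) \<in> {p. \<exists>E\<in>free_ops n m F F'. E \<rho> = complex_of_real p \<cdot>\<^sub>m \<rho>'}" by simp
    then show "{p. \<exists>E\<in>free_ops n m F F'. E \<rho> = complex_of_real p \<cdot>\<^sub>m \<rho>'} \<noteq> {}" by blast
  next
    fix p assume "p \<in> {p. \<exists>E\<in>free_ops n m F F'. E \<rho> = complex_of_real p \<cdot>\<^sub>m \<rho>'}"
    then obtain E where E: "E \<in> free_ops n m F F'" and Er: "E \<rho> = complex_of_real p \<cdot>\<^sub>m \<rho>'" by blast
    show "p \<le> Hval n F \<rho> (einv (ereal (VF m F' \<rho>')))"
      by (rule upper_core[OF assms(1,2,3,4,5) E Er])
  qed
  show "Ptrans n m F F' \<rho> \<rho>' \<ge> Hval n F \<rho> (RFF F' \<rho>')"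
    unfolding Hval_def
  proof (rule cSup_least)
    show "{Re (hs \<rho> W) | W Z. Hfeas n F \<rho> (RFF F' \<rho>') W Z} \<noteq> {}" by (rule Hval_nonempty[OF Fc])
  next
    fix x assume "x \<in> {Re (hs \<rho> W) | W Z. Hfeas n F \<rho> (RFF F' \<rho>') W Z}"
    then obtain W Z where x: "x = Re (hs \<rho> W)" and h: "Hfeas n F \<rho> (RFF F' \<rho>') W Z" by blast
    show "x \<le> Ptrans n m F F' \<rho> \<rho>'" unfolding x by (rule lower_feas[OF assms h])
  qed
qed

end
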